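(* For any graph class $\mathcal{C}$ the following are equivalent: (i) $\mathcal{C}$ has bounded expansion; (ii) for every $r \in \mathbb{N}$ there exists $m\in\mathbb{N}$ such that every vertex of every graph in $\mathcal{C}$ has finite $(r,m)$-rank (i.e. $(r,m)$-rank not equal to $\infty$).
   Context: Bounded expansion is in the sense of Nešetřil and Ossona de Mendez. Graphs are finite and simple. $N_r^G(v)$ is the closed $r$-neighborhood of $v$ (vertices reachable from $v$ by a path with at most $r$ edges, including $v$); $G-S$ is the subgraph induced on $V(G)\setminus S$. The $(r,m)$-rank of vertices of $G$ (values in $\mathbb{N}\cup\{\infty\}$) is defined by the following procedure: initially every vertex has rank $\infty$; in rounds $i=1,2,3,\dots$, every vertex $v$ that currently has rank $\infty$ receives rank $i$ if there exists a set $S\subseteq V(G)\setminus\{v\}$ with $|S|\le m$ such that every vertex of $N_r^{G-S}(v)\setminus\{v\}$ received a finite rank in rounds $1,\dots,i-1$ (all vertices are checked simultaneously in a round); the procedure stops when all vertices have finite rank or a round assigns no new rank. Vertices still of rank $\infty$ keep rank $\infty$. *)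

theory Defs
  imports Main "HOL-Library.Extended_Nat"
begin

type_synonym 'a graph = "'a set \<times> 'a set set"

definition verts :: "'a graph \<Rightarrow> 'a set" where
  "verts G = fst G"

definition edges :: "'a graph \<Rightarrow> 'a set set" where
  "edges G = snd G"

definition is_graph :: "'a graph \<Rightarrow> bool" where
  "is_graph G \<longleftrightarrow> finite (verts G) \<and>
     (\<forall>e\<in>edges G. \<exists>u v. e = {u, v} \<and> u \<noteq> v \<and> u \<in> verts G \<and> v \<in> verts G)"

definition induce :: "'a graph \<Rightarrow> 'a set \<Rightarrow> 'a graph" where
  "induce G X = (verts G \<inter> X, {e \<in> edges G. e \<subseteq> X})"

definition delete_verts :: "'a graph \<Rightarrow> 'a set \<Rightarrow> 'a graph" where
  "delete_verts G S = induce G (verts G - S)"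

fun nbhd :: "'a graph \<Rightarrow> nat \<Rightarrow> 'a \<Rightarrow> 'a set" where
  "nbhd G 0 v = {v}"
| "nbhd G (Suc k) v = nbhd G k v \<union> {w \<in> verts G. \<exists>u \<in> nbhd G k v. {u, w} \<in> edges G}"

text \<open>r-shallow minors: H is a depth-r minor of G if there are pairwise disjoint
nonempty branch sets (one per vertex of H) in V(G), each of which induces a subgraph
of radius at most r (some centre reaches all of the branch set within r steps inside
the induced subgraph), such that every edge of H is realised by an edge of G between
the corresponding branch sets. (Every shallow minor of G is isomorphic to one whose
vertex type is that of G, e.g. by naming branch sets by their centres.)\<close>

definition shallow_minor :: "nat \<Rightarrow> 'b graph \<Rightarrow> 'a graph \<Rightarrow> bool" where
  "shallow_minor r H G \<longleftrightarrow> (\<exists>\<phi> :: 'b \<Rightarrow> 'a set.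
     (\<forall>x\<in>verts H. \<phi> x \<subseteq> verts G \<and>
        (\<exists>c\<in>\<phi> x. \<phi> x \<subseteq> nbhd (induce G (\<phi> x)) r c)) \<and>
     (\<forall>x\<in>verts H. \<forall>y\<in>verts H. x \<noteq> y \<longrightarrow> \<phi> x \<inter> \<phi> y = {}) \<and>
     (\<forall>x\<in>verts H. \<forall>y\<in>verts H. {x, y} \<in> edges H \<longrightarrow>
        (\<exists>u\<in>\<phi> x. \<exists>v\<in>\<phi> y. {u, v} \<in> edges G)))"

definition bounded_expansion :: "'a graph set \<Rightarrow> bool" where
  "bounded_expansion \<C> \<longleftrightarrow> (\<forall>r::nat. \<exists>c::real. \<forall>G\<in>\<C>. \<forall>H :: 'a graph.
      is_graph H \<and> shallow_minor r H G \<longrightarrow>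
      real (card (edges H)) \<le> c * real (card (verts H)))"

text \<open>(r,m)-rank: ranked G r m i is the set of vertices that received a (finite)
rank in rounds 1..i.\<close>

fun ranked :: "'a graph \<Rightarrow> nat \<Rightarrow> nat \<Rightarrow> nat \<Rightarrow> 'a set" where
  "ranked G r m 0 = {}"
| "ranked G r m (Suc i) = ranked G r m i \<union>
     {v \<in> verts G. \<exists>S. S \<subseteq> verts G - {v} \<and> card S \<le> m \<and>
        nbhd (delete_verts G S) r v - {v} \<subseteq> ranked G r m i}"

definition rank :: "'a graph \<Rightarrow> nat \<Rightarrow> nat \<Rightarrow> 'a \<Rightarrow> enat" where
  "rank G r m v = (if \<exists>i. v \<in> ranked G r m i
                   then enat (LEAST i. v \<in> ranked G r m i) else \<infinity>)"

end

theory Submission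
  imports Defs
begin

definition walk :: "'a graph \<Rightarrow> 'a list \<Rightarrow> bool" where
  "walk G ps \<longleftrightarrow> ps \<noteq> [] \<and> set ps \<subseteq> verts G \<and>
     (\<forall>i. Suc i < length ps \<longrightarrow> {ps!i, ps!Suc i} \<in> edges G)"

lemma walk_Nil[simp]: "\<not> walk G []" by (simp add: walk_def)

lemma walk_single[simp]: "walk G [x] \<longleftrightarrow> x \<in> verts G" by (simp add: walk_def)

lemma walk_Cons_Cons[simp]:
  "walk G (x # y # xs) \<longleftrightarrow> {x,y} \<in> edges G \<and> x \<in> verts G \<and> walk G (y # xs)"
  unfolding walk_def
  by (auto simp: nth_Cons split: nat.splits)

lemma walk_verts: "walk G ps \<Longrightarrow> set ps \<subseteq> verts G" by (simp add: walk_def)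

lemma walk_append_cons:
  "walk G (xs @ y # ys) \<longleftrightarrow> walk G (xs @ [y]) \<and> walk G (y # ys)"
proof (induction xs)
  case Nil
  then show ?case by (cases ys) auto
next
  case (Cons a xs)
  then show ?case by (cases xs) auto
qed


lemma walk_snoc: "walk G (xs @ [x, y]) \<longleftrightarrow> walk G (xs @ [x]) \<and> {x,y} \<in> edges G \<and> y \<in> verts G"
proof -
  have "walk G (xs @ [x, y]) \<longleftrightarrow> walk G (xs @ [x]) \<and> walk G [x, y]"
    using walk_append_cons[of G xs x "[y]"] by simp
  moreover have "walk G (xs @ [x]) \<Longrightarrow> x \<in> verts G" using walk_verts[of G "xs @ [x]"] by simp
  ultimately show ?thesis by auto
qed

lemma walk_rev[simp]: "walk G (rev ps) \<longleftrightarrow> walk G ps"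
proof (induction ps rule: length_induct)
  case (1 ps)
  show ?case
  proof (cases ps)
    case Nil then show ?thesis by simp
  next
    case (Cons x xs)
    show ?thesis
    proof (cases xs)
      case Nil then show ?thesis using Cons by simp
    next
      case (Cons y ys)
      have "walk G (rev ps) \<longleftrightarrow> walk G (rev ys @ [y, x])" using \<open>ps = x # xs\<close> Cons by simp
      also have "\<dots> \<longleftrightarrow> walk G (rev ys @ [y]) \<and> {y,x} \<in> edges G \<and> x \<in> verts G" by (rule walk_snoc)
      also have "walk G (rev ys @ [y]) \<longleftrightarrow> walk G (y # ys)"
      proof -
        have "length (y # ys) < length ps" using \<open>ps = x # xs\<close> Cons by simp
        then have "walk G (rev (y # ys)) \<longleftrightarrow> walk G (y # ys)" using "1.IH" by blast
        then show ?thesis by simp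
      qed
      finally show ?thesis using \<open>ps = x # xs\<close> Cons by (auto simp: insert_commute)
    qed
  qed
qed

lemma walk_prefix: "walk G (xs @ ys) \<Longrightarrow> xs \<noteq> [] \<Longrightarrow> walk G xs"
proof (cases ys)
  case Nil
  assume "walk G (xs @ ys)" then show ?thesis using Nil by simp
next
  case (Cons y ys')
  assume a: "walk G (xs @ ys)" "xs \<noteq> []"
  then have "walk G (xs @ [y])" using Cons walk_append_cons[of G xs y ys'] by simp
  moreover obtain xs' x where "xs = xs' @ [x]" using a(2) by (metis append_butlast_last_id)
  ultimately show ?thesis using walk_snoc[of G xs' x y] by simp
qed

lemma walk_suffix: "walk G (xs @ ys) \<Longrightarrow> ys \<noteq> [] \<Longrightarrow> walk G ys"
proof -
  assume a: "walk G (xs @ ys)" "ys \<noteq> []"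
  then obtain y ys' where "ys = y # ys'" by (cases ys) auto
  then show ?thesis using a walk_append_cons[of G xs y ys'] by simp
qed

lemma walk_join: "walk G xs \<Longrightarrow> walk G ys \<Longrightarrow> last xs = hd ys \<Longrightarrow> walk G (xs @ tl ys)"
proof -
  assume a: "walk G xs" "walk G ys" "last xs = hd ys"
  obtain xs' x where x: "xs = xs' @ [x]" using a(1) by (metis append_butlast_last_id walk_Nil)
  obtain y ys' where y: "ys = y # ys'" using a(2) by (cases ys) auto
  have "x = y" using a(3) x y by simp
  then show ?thesis using a x y walk_append_cons[of G xs' x ys'] by simp
qed

lemma walk_edge_join: "walk G xs \<Longrightarrow> walk G ys \<Longrightarrow> {last xs, hd ys} \<in> edges G \<Longrightarrow> walk G (xs @ ys)"
proof -
  assume a: "walk G xs" "walk G ys" "{last xs, hd ys} \<in> edges G"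
  obtain xs' x where x: "xs = xs' @ [x]" using a(1) by (metis append_butlast_last_id walk_Nil)
  obtain y ys' where y: "ys = y # ys'" using a(2) by (cases ys) auto
  have yv: "y \<in> verts G" using a(2) y walk_verts by fastforce
  have e: "{x, y} \<in> edges G" using a(3) x y by simp
  have w1: "walk G (xs' @ [x])" using a(1) x by simp
  have "walk G (xs' @ [x, y])" using walk_snoc[of G xs' x y] w1 e yv by blast
  then have w2: "walk G ((xs' @ [x]) @ [y])" by simp
  have w3: "walk G (y # ys')" using a(2) y by simp
  have "walk G ((xs' @ [x]) @ y # ys')" using walk_append_cons[of G "xs' @ [x]" y ys'] w2 w3 by blast
  then show ?thesis using x y by simp
qed

lemma walk_edge: "walk G (xs @ [x, y] @ ys) \<Longrightarrow> {x, y} \<in> edges G"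
proof -
  assume "walk G (xs @ [x, y] @ ys)"
  then have "walk G ((xs @ [x]) @ y # ys)" by simp
  then have "walk G ((xs @ [x]) @ [y])" using walk_append_cons[of G "xs @ [x]" y ys] by blast
  then have "walk G (xs @ [x, y])" by simp
  then show ?thesis using walk_snoc[of G xs x y] by blast
qed
lemma nbhd_self: "v \<in> nbhd G k v"
  by (induction k) auto

lemma nbhd_mono: "k \<le> k' \<Longrightarrow> nbhd G k v \<subseteq> nbhd G k' v"
proof (induction k' )
  case 0 then show ?case by simp
next
  case (Suc k') then show ?case by (cases "k = Suc k'") auto
qed

lemma nbhd_verts: "u \<in> nbhd G k v \<Longrightarrow> u = v \<or> u \<in> verts G"
  by (induction k arbitrary: u) auto

lemma nbhd_walk: "walk G ps \<Longrightarrow> length ps \<le> Suc k \<Longrightarrow> last ps \<in> nbhd G k (hd ps)"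
proof (induction ps arbitrary: k rule: rev_induct)
  case Nil then show ?case by simp
next
  case (snoc u ps)
  show ?case
  proof (cases ps)
    case Nil then show ?thesis using nbhd_self by simp
  next
    case (Cons a ps')
    obtain k' where k: "k = Suc k'" using snoc.prems Cons by (cases k) auto
    obtain xs x where x: "ps = xs @ [x]" using Cons by (metis append_butlast_last_id list.simps(3))
    have w: "walk G (xs @ [x, u])" using snoc.prems x by simp
    then have "walk G ps" using walk_snoc[of G xs x u] x by simp
    then have "last ps \<in> nbhd G k' (hd ps)" using snoc.IH snoc.prems k by simp
    moreover have "{x, u} \<in> edges G" "u \<in> verts G" using w walk_snoc[of G xs x u] by simp_all
    moreover have "hd (ps @ [u]) = hd ps" using Cons by simp
    ultimately show ?thesis using k x by auto
  qed
qed

lemma walk_nbhd: "v \<in> verts G \<Longrightarrow> u \<in> nbhd G k v \<Longrightarrow>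
   \<exists>ps. walk G ps \<and> hd ps = v \<and> last ps = u \<and> length ps \<le> Suc k"
proof (induction k arbitrary: u)
  case 0 then show ?case by (intro exI[of _ "[v]"]) auto
next
  case (Suc k)
  show ?case
  proof (cases "u \<in> nbhd G k v")
    case True then show ?thesis using Suc.IH Suc.prems by (meson le_SucI)
  next
    case False
    then obtain w where w: "w \<in> nbhd G k v" "{w, u} \<in> edges G" "u \<in> verts G" using Suc.prems by auto
    obtain ps where ps: "walk G ps" "hd ps = v" "last ps = w" "length ps \<le> Suc k"
      using Suc.IH[OF Suc.prems(1) w(1)] by blast
    have "walk G (ps @ [u])" using walk_edge_join[of G ps "[u]"] ps w by simp
    moreover have "hd (ps @ [u]) = v" using ps by (cases ps) auto
    ultimately show ?thesis using ps by (intro exI[of _ "ps @ [u]"]) auto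
  qed
qed

lemma verts_induce[simp]: "verts (induce G X) = verts G \<inter> X"
  by (simp add: induce_def verts_def)

lemma edges_induce[simp]: "edges (induce G X) = {e \<in> edges G. e \<subseteq> X}"
  by (simp add: induce_def edges_def)

lemma walk_induce: "walk (induce G X) ps \<longleftrightarrow> walk G ps \<and> set ps \<subseteq> X"
proof
  assume "walk (induce G X) ps" then show "walk G ps \<and> set ps \<subseteq> X"
    unfolding walk_def by auto
next
  assume a: "walk G ps \<and> set ps \<subseteq> X"
  have "{ps!i, ps!Suc i} \<subseteq> X" if "Suc i < length ps" for i
    using a that nth_mem[of i ps] nth_mem[of "Suc i" ps] by auto
  then show "walk (induce G X) ps" using a unfolding walk_def by auto
qed

lemma walk_delete: "walk (delete_verts G S) ps \<longleftrightarrow> walk G ps \<and> set ps \<inter> S = {}"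
proof -
  have "walk G ps \<Longrightarrow> set ps \<subseteq> verts G" by (rule walk_verts)
  then show ?thesis unfolding delete_verts_def walk_induce by blast
qed

lemma in_nbhd_induce: "walk G ps \<Longrightarrow> set ps \<subseteq> X \<Longrightarrow> z \<in> set ps \<Longrightarrow> length ps \<le> Suc k
  \<Longrightarrow> z \<in> nbhd (induce G X) k (hd ps)"
proof -
  assume a: "walk G ps" "set ps \<subseteq> X" "z \<in> set ps" "length ps \<le> Suc k"
  obtain as bs where ps: "ps = as @ z # bs" using a(3) by (meson split_list)
  have w: "walk G (as @ [z])" using a(1) ps walk_append_cons[of G as z bs] by simp
  have "walk (induce G X) (as @ [z])" using w a(2) ps walk_induce by fastforce
  moreover have "length (as @ [z]) \<le> Suc k" using a(4) ps by simp
  ultimately have "last (as @ [z]) \<in> nbhd (induce G X) k (hd (as @ [z]))" by (rule nbhd_walk)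
  moreover have "hd (as @ [z]) = hd ps" using ps by (cases as) auto
  ultimately show ?thesis by simp
qed

definition inner :: "'a list \<Rightarrow> 'a set" where
  "inner ps = set ps - {hd ps, last ps}"

lemma walk_shorten: "walk G ps \<Longrightarrow> \<exists>qs. walk G qs \<and> distinct qs \<and> hd qs = hd ps \<and> last qs = last ps
   \<and> set qs \<subseteq> set ps \<and> length qs \<le> length ps"
proof (induction ps rule: length_induct)
  case (1 ps)
  show ?case
  proof (cases "distinct ps")
    case True then show ?thesis using "1.prems" by blast
  next
    case False
    then obtain xs y ys zs where ps: "ps = xs @ [y] @ ys @ [y] @ zs" using not_distinct_decomp by blast
    define ps' where "ps' = xs @ y # zs"
    have w1: "walk G (xs @ [y])" using "1.prems" ps walk_append_cons[of G xs y "ys @ y # zs"] by simp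
    have "walk G ((xs @ y # ys) @ (y # zs))" using "1.prems" ps by simp
    then have w2: "walk G (y # zs)" using walk_suffix[of G "xs @ y # ys" "y # zs"] by simp
    have w: "walk G ps'" unfolding ps'_def using walk_append_cons[of G xs y zs] w1 w2 by simp
    have h: "hd ps' = hd ps" unfolding ps'_def ps by (cases xs) auto
    have l: "last ps' = last ps" unfolding ps'_def ps by (cases zs) auto
    have s: "set ps' \<subseteq> set ps" unfolding ps'_def ps by auto
    have len: "length ps' < length ps" unfolding ps'_def ps by simp
    obtain qs where "walk G qs \<and> distinct qs \<and> hd qs = hd ps' \<and> last qs = last ps'
       \<and> set qs \<subseteq> set ps' \<and> length qs \<le> length ps'" using "1.IH" len w by blast
    then show ?thesis using h l s len by (intro exI[of _ qs]) auto
  qed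
qed

lemma walk_upath:
  assumes "walk G ps" "hd ps \<in> U" "last ps \<in> U" "last ps \<noteq> hd ps"
  shows "\<exists>qs. walk G qs \<and> distinct qs \<and> hd qs = hd ps \<and> last qs \<in> U \<and> last qs \<noteq> hd ps
     \<and> set qs \<subseteq> set ps \<and> length qs \<le> length ps \<and> inner qs \<inter> U = {}"
proof -
  obtain P where P: "walk G P" "distinct P" "hd P = hd ps" "last P = last ps" "set P \<subseteq> set ps"
    "length P \<le> length ps" using walk_shorten[OF assms(1)] by blast
  obtain u T where uT: "P = u # T" using P(1) by (cases P) auto
  have "T \<noteq> []" using uT P(3,4) assms(4) by auto
  then have "last P \<in> set T" using uT by simp
  then have "\<exists>x\<in>set T. x \<in> U" using P(4) assms(3) by auto
  then obtain xs y zs where T: "T = xs @ y # zs" "y \<in> U" "\<forall>x\<in>set xs. x \<notin> U"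
    using split_list_first_prop[of T "\<lambda>x. x \<in> U"] by blast
  define qs where "qs = u # xs @ [y]"
  have "P = qs @ zs" unfolding qs_def using uT T by simp
  then have wq: "walk G qs" "distinct qs" using P(1,2) walk_prefix[of G qs zs] unfolding qs_def by auto
  have "y \<noteq> u" using P(2) uT T by auto
  moreover have "inner qs \<inter> U = {}" unfolding inner_def qs_def using T(3) by auto
  moreover have "set qs \<subseteq> set ps" using \<open>P = qs @ zs\<close> P(5) by auto
  moreover have "length qs \<le> length ps" using \<open>P = qs @ zs\<close> P(6) by auto
  moreover have "hd qs = hd ps" "last qs = y" "u = hd ps" using P(3) uT unfolding qs_def by auto
  ultimately show ?thesis using wq T(2) by (intro exI[of _ qs]) simp
qed

section \<open>Ranks\<close>

definition rho :: "'a graph \<Rightarrow> nat \<Rightarrow> nat \<Rightarrow> 'a \<Rightarrow> nat" where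
  "rho G r m v = (LEAST i. v \<in> ranked G r m i)"

lemma ranked_Suc_mono: "ranked G r m i \<subseteq> ranked G r m (Suc i)"
  by auto

lemma ranked_mono: "i \<le> j \<Longrightarrow> ranked G r m i \<subseteq> ranked G r m j"
proof (induction j)
  case 0 then show ?case by simp
next
  case (Suc j)
  show ?case
  proof (cases "i = Suc j")
    case True then show ?thesis by simp
  next
    case False
    then have "i \<le> j" using Suc.prems by simp
    then show ?thesis using Suc.IH ranked_Suc_mono[of G r m j] by blast
  qed
qed

lemma ranked_verts: "ranked G r m i \<subseteq> verts G"
proof (induction i)
  case 0 then show ?case by simp
next
  case (Suc i)
  have "ranked G r m (Suc i) = ranked G r m i \<union> {v \<in> verts G. \<exists>S. S \<subseteq> verts G - {v} \<and> card S \<le> m \<and>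
        nbhd (delete_verts G S) r v - {v} \<subseteq> ranked G r m i}" by (rule ranked.simps(2))
  also have "\<dots> \<subseteq> verts G" using Suc.IH by (intro Un_least) auto
  finally show ?case .
qed

lemma rho_le: "v \<in> ranked G r m i \<Longrightarrow> rho G r m v \<le> i"
  unfolding rho_def by (rule Least_le)

lemma rho_cert:
  assumes "v \<in> ranked G r m i"
  shows "\<exists>S. S \<subseteq> verts G - {v} \<and> card S \<le> m \<and>
     (\<forall>z \<in> nbhd (delete_verts G S) r v - {v}. rho G r m z < rho G r m v)"
proof -
  let ?k = "rho G r m v"
  have vk: "v \<in> ranked G r m ?k" unfolding rho_def using assms by (rule LeastI)
  have "?k \<noteq> 0" using vk by (metis empty_iff ranked.simps(1))
  then obtain j where j: "?k = Suc j" by (cases ?k) auto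
  have "v \<notin> ranked G r m j" using j unfolding rho_def by (metis lessI not_less_Least)
  then obtain S where S: "S \<subseteq> verts G - {v}" "card S \<le> m"
     "nbhd (delete_verts G S) r v - {v} \<subseteq> ranked G r m j" using vk j by auto
  have "\<forall>z \<in> nbhd (delete_verts G S) r v - {v}. rho G r m z < rho G r m v"
  proof
    fix z assume "z \<in> nbhd (delete_verts G S) r v - {v}"
    then have "z \<in> ranked G r m j" using S(3) by blast
    then have "rho G r m z \<le> j" by (rule rho_le)
    then show "rho G r m z < rho G r m v" using j by simp
  qed
  then show ?thesis using S by blast
qed

definition Sf :: "'a graph \<Rightarrow> nat \<Rightarrow> nat \<Rightarrow> 'a \<Rightarrow> 'a set" where
  "Sf G r m v = (if \<exists>i. v \<in> ranked G r m i then (SOME S. S \<subseteq> verts G - {v} \<and> card S \<le> m \<and>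
     (\<forall>z \<in> nbhd (delete_verts G S) r v - {v}. rho G r m z < rho G r m v)) else {})"

lemma Sf_props:
  assumes "v \<in> ranked G r m i"
  shows "Sf G r m v \<subseteq> verts G - {v} \<and> card (Sf G r m v) \<le> m \<and>
     (\<forall>z \<in> nbhd (delete_verts G (Sf G r m v)) r v - {v}. rho G r m z < rho G r m v)"
proof -
  have "\<exists>i. v \<in> ranked G r m i" using assms by blast
  then have eq: "Sf G r m v = (SOME S. S \<subseteq> verts G - {v} \<and> card S \<le> m \<and>
     (\<forall>z \<in> nbhd (delete_verts G S) r v - {v}. rho G r m z < rho G r m v))" (is "_ = Eps ?P")
    unfolding Sf_def by simp
  show ?thesis unfolding eq by (rule someI_ex[OF rho_cert[OF assms]])
qed

lemma Sf_fin:
  assumes "finite (verts G)"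
  shows "finite (Sf G r m v) \<and> card (Sf G r m v) \<le> m"
proof (cases "\<exists>i. v \<in> ranked G r m i")
  case True
  then obtain i where "v \<in> ranked G r m i" by blast
  then have "Sf G r m v \<subseteq> verts G" "card (Sf G r m v) \<le> m" using Sf_props[of v G r m i] by auto
  then show ?thesis using assms finite_subset by auto
next
  case False then show ?thesis unfolding Sf_def by simp
qed

fun cset :: "('a \<Rightarrow> 'a set) \<Rightarrow> nat \<Rightarrow> 'a \<Rightarrow> 'a set" where
  "cset F 0 v = {v}"
| "cset F (Suc k) v = insert v (\<Union> (cset F k ` F v))"

lemma cset_self: "v \<in> cset F k v"
  by (cases k) auto

lemma cset_Suc_mono: "cset F k v \<subseteq> cset F (Suc k) v"
proof (induction k arbitrary: v)
  case 0 then show ?case by simp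
next
  case (Suc k)
  then show ?case by auto
qed

lemma cset_mono: "k \<le> k' \<Longrightarrow> cset F k v \<subseteq> cset F k' v"
proof (induction k')
  case 0 then show ?case by simp
next
  case (Suc k')
  then show ?case using cset_Suc_mono[of F k' v] by (cases "k = Suc k'") auto
qed

lemma cset_step: "u \<in> F v \<Longrightarrow> cset F k u \<subseteq> cset F (Suc k) v"
  by auto

lemma cset_card:
  assumes "\<And>v. finite (F v) \<and> card (F v) \<le> m"
  shows "finite (cset F k v) \<and> card (cset F k v) \<le> (m+1)^k"
proof (induction k arbitrary: v)
  case 0 then show ?case by simp
next
  case (Suc k)
  have fin: "finite (F v)" "card (F v) \<le> m" using assms by auto
  have f: "finite (\<Union> (cset F k ` F v))" using fin Suc by auto
  have "card (\<Union> (cset F k ` F v)) \<le> (\<Sum>u\<in>F v. card (cset F k u))"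
    using card_UN_le[OF fin(1)] by simp
  also have "\<dots> \<le> card (F v) * (m+1)^k"
    using sum_bounded_above[of "F v" "\<lambda>u. card (cset F k u)" "(m+1)^k"] Suc by simp
  also have "\<dots> \<le> m * (m+1)^k" using fin(2) by simp
  finally have c: "card (\<Union> (cset F k ` F v)) \<le> m * (m+1)^k" .
  have "card (cset F (Suc k) v) \<le> Suc (card (\<Union> (cset F k ` F v)))"
    by (simp add: card_insert_le_m1 f card_insert_if)
  also have "\<dots> \<le> (m+1)^(Suc k)"
  proof -
    have h1: "(0::nat) < (m+1)^k" by simp
    have h2: "(m+1)^(Suc k) = (m+1)^k + m*(m+1)^k" by simp
    show ?thesis using c h1 h2 by linarith
  qed
  finally show ?case using f by simp
qed

lemma key_lemma:
  fixes G :: "'a graph"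
  assumes all: "\<forall>v\<in>verts G. \<exists>i. v \<in> ranked G R m i"
  shows "walk G ps \<Longrightarrow> length ps \<le> Suc R \<Longrightarrow> last ps \<in> Y \<Longrightarrow>
    (\<forall>z\<in>set ps. z \<notin> Y \<longrightarrow> rho G R m z \<le> rho G R m (last ps)) \<Longrightarrow>
    cset (Sf G R m) (length ps - 1) (hd ps) \<inter> Y \<noteq> {}"
proof (induction ps rule: length_induct)
  case (1 ps)
  let ?F = "Sf G R m"
  let ?r = "rho G R m"
  obtain v T where ps: "ps = v # T" using "1.prems"(1) by (cases ps) auto
  show ?case
  proof (cases "v \<in> Y")
    case True
    then show ?thesis using cset_self[of v ?F "length ps - 1"] ps by auto
  next
    case False
    have "T \<noteq> []" using False ps "1.prems"(3) by auto
    have vv: "v \<in> verts G" using "1.prems"(1) ps walk_verts by fastforce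
    obtain i where vi: "v \<in> ranked G R m i" using all vv by blast
    have SF: "?F v \<subseteq> verts G - {v}"
      "\<forall>z \<in> nbhd (delete_verts G (?F v)) R v - {v}. ?r z < ?r v"
      using Sf_props[OF vi] by auto
    have rv: "?r v \<le> ?r (last ps)" using "1.prems"(4) False ps by simp
    have "last ps \<in> set T" using \<open>T \<noteq> []\<close> ps by simp
    then have "\<exists>x\<in>set T. x \<in> ?F v \<or> ?r v \<le> ?r x" using rv by blast
    then obtain xs z zs where T: "T = xs @ z # zs" "z \<in> ?F v \<or> ?r v \<le> ?r z"
      "\<forall>x\<in>set xs. \<not> (x \<in> ?F v \<or> ?r v \<le> ?r x)"
      using split_list_first_prop[of T "\<lambda>x. x \<in> ?F v \<or> ?r v \<le> ?r x"] by blast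
    have zcase: "z = v \<or> z \<in> ?F v"
    proof (rule ccontr)
      assume "\<not> (z = v \<or> z \<in> ?F v)"
      then have zn: "z \<noteq> v" "z \<notin> ?F v" "?r v \<le> ?r z" using T(2) by auto
      have "ps = (v # xs @ [z]) @ zs" using ps T by simp
      then have w: "walk G (v # xs @ [z])" "length (v # xs @ [z]) \<le> Suc R"
        using "1.prems"(1,2) walk_prefix[of G "v # xs @ [z]" zs] by auto
      have "set (v # xs @ [z]) \<inter> ?F v = {}" using SF(1) T(3) zn(2) by auto
      then have "walk (delete_verts G (?F v)) (v # xs @ [z])" using w(1) walk_delete by blast
      then have "last (v # xs @ [z]) \<in> nbhd (delete_verts G (?F v)) R (hd (v # xs @ [z]))"
        using w(2) nbhd_walk by blast
      then have "z \<in> nbhd (delete_verts G (?F v)) R v" by simp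
      then have "?r z < ?r v" using SF(2) zn(1) by blast
      then show False using zn(3) by simp
    qed
    define qs where "qs = z # zs"
    have "ps = (v # xs) @ qs" using ps T unfolding qs_def by simp
    then have wq: "walk G qs" using "1.prems"(1) walk_suffix[of G "v # xs" qs] unfolding qs_def by simp
    have lq: "length qs < length ps" using \<open>ps = (v # xs) @ qs\<close> by simp
    have lastq: "last qs = last ps" using \<open>ps = (v # xs) @ qs\<close> unfolding qs_def by simp
    have setq: "set qs \<subseteq> set ps" using \<open>ps = (v # xs) @ qs\<close> by auto
    have c1: "length qs \<le> Suc R" using lq "1.prems"(2) by simp
    have c2: "last qs \<in> Y" using lastq "1.prems"(3) by simp
    have c3: "\<forall>z\<in>set qs. z \<notin> Y \<longrightarrow> ?r z \<le> ?r (last qs)" using lastq setq "1.prems"(4) by auto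
    have "cset ?F (length qs - 1) (hd qs) \<inter> Y \<noteq> {}"
      using "1.IH" lq wq c1 c2 c3 by blast
    then have IH: "cset ?F (length zs) z \<inter> Y \<noteq> {}" unfolding qs_def by simp
    have len: "length ps - 1 = Suc (length xs + length zs)" using ps T by simp
    have "cset ?F (length zs) z \<subseteq> cset ?F (length ps - 1) v"
    proof (cases "z = v")
      case True
      then show ?thesis using cset_mono[of "length zs" "length ps - 1" ?F v] len by simp
    next
      case False
      then have "z \<in> ?F v" using zcase by simp
      then have "cset ?F (length zs) z \<subseteq> cset ?F (Suc (length zs)) v" by (rule cset_step)
      also have "\<dots> \<subseteq> cset ?F (length ps - 1) v" using cset_mono[of "Suc (length zs)" "length ps - 1" ?F v] len by linarith
      finally show ?thesis .
    qed
    then show ?thesis using IH ps by auto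
  qed
qed

lemma reach_in_branch:
  assumes "B \<subseteq> verts G" "c \<in> B" "B \<subseteq> nbhd (induce G B) r c" "a \<in> B" "b \<in> B"
  shows "\<exists>ps. walk G ps \<and> hd ps = a \<and> last ps = b \<and> set ps \<subseteq> B \<and> length ps \<le> 2*r+1"
proof -
  have cv: "c \<in> verts (induce G B)" using assms(1,2) by auto
  obtain p where p: "walk (induce G B) p" "hd p = c" "last p = a" "length p \<le> Suc r"
    using walk_nbhd[OF cv, of a r] assms(3,4) by blast
  obtain q where q: "walk (induce G B) q" "hd q = c" "last q = b" "length q \<le> Suc r"
    using walk_nbhd[OF cv, of b r] assms(3,5) by blast
  have wp: "walk G p" "set p \<subseteq> B" using p(1) walk_induce[of G B p] by simp_all
  have wq: "walk G q" "set q \<subseteq> B" using q(1) walk_induce[of G B q] by simp_all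
  have pne: "p \<noteq> []" "q \<noteq> []" using wp wq by auto
  have "walk G (rev p)" using wp by simp
  moreover have "last (rev p) = hd q" using p(2) q(2) pne by (simp add: last_rev)
  ultimately have w: "walk G (rev p @ tl q)" using wq walk_join[of G "rev p" q] by blast
  have h: "hd (rev p @ tl q) = a" using p(3) pne by (simp add: hd_rev)
  have l: "last (rev p @ tl q) = b"
  proof (cases "tl q = []")
    case True
    then have "q = [c]" using q(2) pne by (cases q) auto
    then show ?thesis using True p(2) q(3) pne by (simp add: last_rev)
  next
    case False
    then have "last (tl q) = last q" using pne by (cases q) auto
    then show ?thesis using False q(3) by simp
  qed
  have "set (tl q) \<subseteq> set q" by (cases q) auto
  then have "set (rev p @ tl q) \<subseteq> B" using wp wq by auto
  moreover have "length (rev p @ tl q) \<le> 2*r+1" using p(4) q(4) by simp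
  ultimately show ?thesis using w h l by blast
qed

lemma exists_max_nat:
  fixes f :: "'b \<Rightarrow> nat"
  assumes "finite A" "A \<noteq> {}"
  shows "\<exists>w\<in>A. \<forall>y\<in>A. f y \<le> f w"
proof -
  have "Max (f ` A) \<in> f ` A" using assms by simp
  then obtain w where w: "w \<in> A" "f w = Max (f ` A)" by auto
  have "\<forall>y\<in>A. f y \<le> f w" using w(2) assms by simp
  then show ?thesis using w(1) by blast
qed

lemma rank_density:
  fixes G :: "'a graph" and H :: "'b graph"
  assumes G: "is_graph G" and all: "\<forall>v\<in>verts G. \<exists>i. v \<in> ranked G (4*r+1) m i"
    and H: "is_graph H" and SM: "shallow_minor r H G"
  shows "card (edges H) \<le> (m+1)^(4*r+1) * card (verts H)"
proof -
  define R where "R = 4*r+1"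
  let ?F = "Sf G R m"
  let ?r = "rho G R m"
  have allR: "\<forall>v\<in>verts G. \<exists>i. v \<in> ranked G R m i" using all unfolding R_def .
  have finG: "finite (verts G)" using G unfolding is_graph_def by simp
  have finH: "finite (verts H)" using H unfolding is_graph_def by simp
  obtain \<phi> :: "'b \<Rightarrow> 'a set" where
    p1: "\<forall>x\<in>verts H. \<phi> x \<subseteq> verts G \<and> (\<exists>c\<in>\<phi> x. \<phi> x \<subseteq> nbhd (induce G (\<phi> x)) r c)" and
    p2: "\<forall>x\<in>verts H. \<forall>y\<in>verts H. x \<noteq> y \<longrightarrow> \<phi> x \<inter> \<phi> y = {}" and
    p3: "\<forall>x\<in>verts H. \<forall>y\<in>verts H. {x, y} \<in> edges H \<longrightarrow> (\<exists>u\<in>\<phi> x. \<exists>v\<in>\<phi> y. {u, v} \<in> edges G)"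
    using SM unfolding shallow_minor_def by blast
  have reach: "\<exists>ps. walk G ps \<and> hd ps = a \<and> last ps = b \<and> set ps \<subseteq> \<phi> x \<and> length ps \<le> 2*r+1"
    if "x \<in> verts H" "a \<in> \<phi> x" "b \<in> \<phi> x" for x a b
  proof -
    have hx: "\<phi> x \<subseteq> verts G \<and> (\<exists>c\<in>\<phi> x. \<phi> x \<subseteq> nbhd (induce G (\<phi> x)) r c)"
      using p1 that(1) by (rule bspec)
    then obtain c where c: "c \<in> \<phi> x" "\<phi> x \<subseteq> nbhd (induce G (\<phi> x)) r c" by blast
    show ?thesis by (rule reach_in_branch[OF conjunct1[OF hx] c that(2,3)])
  qed
  have Mex: "\<exists>w\<in>\<phi> x. \<forall>y\<in>\<phi> x. ?r y \<le> ?r w" if "x \<in> verts H" for x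
  proof -
    have "\<phi> x \<subseteq> verts G" using p1 that by blast
    then have "finite (\<phi> x)" using finG by (rule finite_subset)
    moreover have "\<phi> x \<noteq> {}" using p1 that by blast
    ultimately show ?thesis by (rule exists_max_nat)
  qed
  define M where "M x = (SOME w. w \<in> \<phi> x \<and> (\<forall>y\<in>\<phi> x. ?r y \<le> ?r w))" for x
  have M0: "M x \<in> \<phi> x \<and> (\<forall>y\<in>\<phi> x. ?r y \<le> ?r (M x))" if "x \<in> verts H" for x
    unfolding M_def by (rule someI_ex) (rule Mex[OF that, unfolded Bex_def])
  have M: "M x \<in> \<phi> x" "\<forall>y\<in>\<phi> x. ?r y \<le> ?r (M x)" if "x \<in> verts H" for x
    using M0[OF that] by simp_all
  have hit: "cset ?F R (M x) \<inter> \<phi> y \<noteq> {}"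
    if xy: "x \<in> verts H" "y \<in> verts H" "{x,y} \<in> edges H" "?r (M x) \<le> ?r (M y)" for x y
  proof -
    obtain u w where uw: "u \<in> \<phi> x" "w \<in> \<phi> y" "{u, w} \<in> edges G" using p3 xy by blast
    obtain p where p: "walk G p" "hd p = M x" "last p = u" "set p \<subseteq> \<phi> x" "length p \<le> 2*r+1"
      using reach[OF xy(1) M(1)[OF xy(1)] uw(1)] by blast
    obtain q where q: "walk G q" "hd q = w" "last q = M y" "set q \<subseteq> \<phi> y" "length q \<le> 2*r+1"
      using reach[OF xy(2) uw(2) M(1)[OF xy(2)]] by blast
    have wpq: "walk G (p @ q)" using walk_edge_join[of G p q] p q uw(3) by simp
    have pne: "p \<noteq> []" "q \<noteq> []" using p(1) q(1) by auto
    have hpq: "hd (p @ q) = M x" using p(2) pne by simp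
    have lpq: "last (p @ q) = M y" using q(3) pne by simp
    have len: "length (p @ q) \<le> Suc R" using p(5) q(5) unfolding R_def by simp
    have cond: "\<forall>z\<in>set (p @ q). z \<notin> \<phi> y \<longrightarrow> ?r z \<le> ?r (last (p @ q))"
    proof
      fix z assume "z \<in> set (p @ q)"
      then have "z \<in> \<phi> x \<or> z \<in> \<phi> y" using p(4) q(4) by auto
      then show "z \<notin> \<phi> y \<longrightarrow> ?r z \<le> ?r (last (p @ q))" using M(2)[OF xy(1)] xy(4) lpq by auto
    qed
    have "cset ?F (length (p @ q) - 1) (hd (p @ q)) \<inter> \<phi> y \<noteq> {}"
      using key_lemma[OF allR wpq len _ cond] lpq M(1)[OF xy(2)] by simp
    moreover have "cset ?F (length (p @ q) - 1) (M x) \<subseteq> cset ?F R (M x)"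
      using cset_mono[of "length (p @ q) - 1" R ?F "M x"] len by simp
    ultimately show ?thesis using hpq by auto
  qed
  define Out where "Out x = {y \<in> verts H. {x,y} \<in> edges H \<and> ?r (M x) \<le> ?r (M y)}" for x
  have Fin: "\<And>v. finite (?F v) \<and> card (?F v) \<le> m" using Sf_fin[OF finG] by blast
  have cardOut: "card (Out x) \<le> (m+1)^R" if "x \<in> verts H" for x
  proof -
    define g where "g y = (SOME z. z \<in> cset ?F R (M x) \<inter> \<phi> y)" for y
    have g: "g y \<in> cset ?F R (M x) \<inter> \<phi> y" if "y \<in> Out x" for y
    proof -
      have "cset ?F R (M x) \<inter> \<phi> y \<noteq> {}" using hit[OF \<open>x \<in> verts H\<close>] that unfolding Out_def by blast
      then show ?thesis unfolding g_def by (metis ex_in_conv someI_ex)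
    qed
    have "inj_on g (Out x)"
    proof (rule inj_onI)
      fix y1 y2 assume "y1 \<in> Out x" "y2 \<in> Out x" "g y1 = g y2"
      then have "g y1 \<in> \<phi> y1 \<inter> \<phi> y2" using g[OF \<open>y1 \<in> Out x\<close>] g[OF \<open>y2 \<in> Out x\<close>] by auto
      moreover have "y1 \<in> verts H" "y2 \<in> verts H" using \<open>y1 \<in> Out x\<close> \<open>y2 \<in> Out x\<close> unfolding Out_def by auto
      ultimately show "y1 = y2" using p2 by blast
    qed
    moreover have "g ` Out x \<subseteq> cset ?F R (M x)" using g by blast
    moreover have "finite (cset ?F R (M x))" using cset_card[of ?F m R "M x"] Fin by blast
    ultimately have "card (Out x) \<le> card (cset ?F R (M x))" by (rule card_inj_on_le)
    also have "\<dots> \<le> (m+1)^R" using cset_card[of ?F m R "M x"] Fin by blast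
    finally show ?thesis .
  qed
  have sub: "edges H \<subseteq> (\<Union>x\<in>verts H. (\<lambda>y. {x,y}) ` Out x)"
  proof
    fix e assume e: "e \<in> edges H"
    then obtain a b where ab: "e = {a,b}" "a \<in> verts H" "b \<in> verts H" using H unfolding is_graph_def by blast
    show "e \<in> (\<Union>x\<in>verts H. (\<lambda>y. {x,y}) ` Out x)"
    proof (cases "?r (M a) \<le> ?r (M b)")
      case True
      then have "b \<in> Out a" using ab e unfolding Out_def by auto
      then show ?thesis using ab by blast
    next
      case False
      then have "a \<in> Out b" using ab e unfolding Out_def by (auto simp: insert_commute)
      then show ?thesis using ab by (auto simp: insert_commute)
    qed
  qed
  have finOut: "finite (Out x)" for x using finH unfolding Out_def by simp
  have "card (edges H) \<le> card (\<Union>x\<in>verts H. (\<lambda>y. {x,y}) ` Out x)"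
    using sub finH finOut by (intro card_mono) auto
  also have "\<dots> \<le> (\<Sum>x\<in>verts H. card ((\<lambda>y. {x,y}) ` Out x))" by (rule card_UN_le[OF finH])
  also have "\<dots> \<le> (\<Sum>x\<in>verts H. card (Out x))" by (intro sum_mono card_image_le finOut)
  also have "\<dots> \<le> (\<Sum>x\<in>verts H. (m+1)^R)" by (intro sum_mono cardOut)
  also have "\<dots> = (m+1)^R * card (verts H)" by simp
  finally show ?thesis unfolding R_def .
qed

lemma ranked_stabilizes:
  assumes fin: "finite (verts G)"
  shows "\<exists>i. ranked G r m (Suc i) = ranked G r m i"
proof (rule ccontr)
  assume "\<not> ?thesis"
  then have ne: "\<And>i. ranked G r m (Suc i) \<noteq> ranked G r m i" by blast
  have "i \<le> card (ranked G r m i)" for i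
  proof (induction i)
    case 0 then show ?case by simp
  next
    case (Suc i)
    have "finite (ranked G r m (Suc i))" using ranked_verts fin by (rule finite_subset)
    moreover have "ranked G r m i \<subset> ranked G r m (Suc i)" using ne[of i] ranked_Suc_mono[of G r m i] by blast
    ultimately have "card (ranked G r m i) < card (ranked G r m (Suc i))" by (rule psubset_card_mono)
    then show ?case using Suc.IH by simp
  qed
  moreover have "card (ranked G r m i) \<le> card (verts G)" for i
    using fin ranked_verts by (rule card_mono)
  ultimately have "Suc (card (verts G)) \<le> card (verts G)" by (meson le_trans)
  then show False by simp
qed

lemma ranked_stall:
  assumes fin: "finite (verts G)" and v: "v \<in> verts G" and nv: "\<forall>i. v \<notin> ranked G r m i"
  shows "\<exists>U. U \<subseteq> verts G \<and> v \<in> U \<and> (\<forall>u\<in>U. \<forall>S. S \<subseteq> verts G - {u} \<and> card S \<le> m \<longrightarrow>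
     (\<exists>w\<in>U. w \<noteq> u \<and> w \<in> nbhd (delete_verts G S) r u))"
proof -
  obtain i where i: "ranked G r m (Suc i) = ranked G r m i" using ranked_stabilizes[OF fin] by blast
  define U where "U = verts G - ranked G r m i"
  have "\<forall>u\<in>U. \<forall>S. S \<subseteq> verts G - {u} \<and> card S \<le> m \<longrightarrow>
     (\<exists>w\<in>U. w \<noteq> u \<and> w \<in> nbhd (delete_verts G S) r u)"
  proof (intro ballI allI impI)
    fix u S assume u: "u \<in> U" and S: "S \<subseteq> verts G - {u} \<and> card S \<le> m"
    have "u \<notin> ranked G r m (Suc i)" using u i unfolding U_def by simp
    moreover have "u \<in> verts G" using u unfolding U_def by simp
    ultimately have "\<not> (nbhd (delete_verts G S) r u - {u} \<subseteq> ranked G r m i)" using S by auto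
    then obtain w where w: "w \<in> nbhd (delete_verts G S) r u" "w \<noteq> u" "w \<notin> ranked G r m i" by blast
    have "w \<in> verts (delete_verts G S)" using nbhd_verts[OF w(1)] w(2) by simp
    then have "w \<in> verts G" unfolding delete_verts_def by simp
    then have "w \<in> U" using w(3) unfolding U_def by simp
    then show "\<exists>w\<in>U. w \<noteq> u \<and> w \<in> nbhd (delete_verts G S) r u" using w by blast
  qed
  moreover have "v \<in> U" using v nv unfolding U_def by simp
  ultimately show ?thesis unfolding U_def by blast
qed

definition fanpath :: "'a graph \<Rightarrow> 'a set \<Rightarrow> nat \<Rightarrow> 'a \<Rightarrow> 'a list \<Rightarrow> bool" where
  "fanpath G U r u P \<longleftrightarrow> walk G P \<and> distinct P \<and> hd P = u \<and> last P \<in> U \<and> last P \<noteq> u \<and>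
     length P \<le> Suc r \<and> inner P \<inter> U = {}"

lemma fan_exists:
  assumes UG: "U \<subseteq> verts G" and u: "u \<in> U"
    and stall: "\<forall>S. S \<subseteq> verts G - {u} \<and> card S \<le> m \<longrightarrow>
     (\<exists>w\<in>U. w \<noteq> u \<and> w \<in> nbhd (delete_verts G S) r u)"
  shows "r * k \<le> m \<Longrightarrow> \<exists>Fs. finite Fs \<and> card Fs = k \<and> (\<forall>P\<in>Fs. fanpath G U r u P) \<and>
     (\<forall>P\<in>Fs. \<forall>Q\<in>Fs. P \<noteq> Q \<longrightarrow> set (tl P) \<inter> set (tl Q) = {})"
proof (induction k)
  case 0 then show ?case by (intro exI[of _ "{}"]) simp
next
  case (Suc k)
  then have "r * k \<le> m" by simp
  then obtain Fs where Fs: "finite Fs" "card Fs = k" "\<forall>P\<in>Fs. fanpath G U r u P"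
    "\<forall>P\<in>Fs. \<forall>Q\<in>Fs. P \<noteq> Q \<longrightarrow> set (tl P) \<inter> set (tl Q) = {}" using Suc.IH by blast
  define S where "S = (\<Union>P\<in>Fs. set (tl P))"
  have Ssub: "S \<subseteq> verts G - {u}"
  proof
    fix z assume "z \<in> S"
    then obtain P where P: "P \<in> Fs" "z \<in> set (tl P)" unfolding S_def by blast
    have fp: "walk G P" "distinct P" "hd P = u" using Fs(3) P(1) unfolding fanpath_def by auto
    have "P \<noteq> []" using fp(1) by auto
    then have "P = u # tl P" using fp(3) by (cases P) auto
    then have "u \<notin> set (tl P)" using fp(2) by (metis distinct.simps(2))
    moreover have "z \<in> set P" using P(2) by (cases P) auto
    ultimately show "z \<in> verts G - {u}" using P(2) walk_verts[OF fp(1)] by auto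
  qed
  have "card S \<le> (\<Sum>P\<in>Fs. card (set (tl P)))" unfolding S_def by (rule card_UN_le[OF Fs(1)])
  also have "\<dots> \<le> (\<Sum>P\<in>Fs. r)"
  proof (rule sum_mono)
    fix P assume "P \<in> Fs"
    then have "length P \<le> Suc r" using Fs(3) unfolding fanpath_def by auto
    then have "length (tl P) \<le> r" by simp
    then show "card (set (tl P)) \<le> r" using card_length[of "tl P"] by linarith
  qed
  also have "\<dots> = r * k" using Fs(2) by simp
  finally have cS: "card S \<le> m" using \<open>r * k \<le> m\<close> by simp
  obtain w where w: "w \<in> U" "w \<noteq> u" "w \<in> nbhd (delete_verts G S) r u" using stall Ssub cS by blast
  have uv: "u \<in> verts (delete_verts G S)" using u UG Ssub unfolding delete_verts_def by auto
  obtain ps where ps: "walk (delete_verts G S) ps" "hd ps = u" "last ps = w" "length ps \<le> Suc r"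
    using walk_nbhd[OF uv w(3)] by blast
  have wps: "walk G ps" "set ps \<inter> S = {}" using ps(1) walk_delete[of G S ps] by simp_all
  obtain P where P: "walk G P" "distinct P" "hd P = hd ps" "last P \<in> U" "last P \<noteq> hd ps"
    "set P \<subseteq> set ps" "length P \<le> length ps" "inner P \<inter> U = {}"
    using walk_upath[OF wps(1), of U] ps(2,3) u w(1,2) by auto
  have fpP: "fanpath G U r u P" unfolding fanpath_def using P ps(2,4) by auto
  have tlP: "set (tl P) \<inter> S = {}"
  proof -
    have "set (tl P) \<subseteq> set P" by (cases P) auto
    then show ?thesis using P(6) wps(2) by blast
  qed
  have tlne: "tl P \<noteq> []"
  proof
    assume "tl P = []"
    moreover have "P \<noteq> []" using P(1) by auto
    ultimately have "P = [hd P]" by (cases P) auto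
    then have "last P = hd P" by (metis last.simps)
    then show False using P(3,5) by simp
  qed
  have notin: "P \<notin> Fs"
  proof
    assume "P \<in> Fs"
    then have "set (tl P) \<subseteq> S" unfolding S_def by blast
    then show False using tlP tlne by (cases "tl P") auto
  qed
  define Fs' where "Fs' = insert P Fs"
  have "finite Fs'" "card Fs' = Suc k" using Fs(1,2) notin unfolding Fs'_def by auto
  moreover have "\<forall>Q\<in>Fs'. fanpath G U r u Q" using Fs(3) fpP unfolding Fs'_def by auto
  moreover have "\<forall>Q\<in>Fs'. \<forall>Q'\<in>Fs'. Q \<noteq> Q' \<longrightarrow> set (tl Q) \<inter> set (tl Q') = {}"
  proof -
    have "set (tl P) \<inter> set (tl Q) = {}" if "Q \<in> Fs" for Q
      using tlP that unfolding S_def by blast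
    then show ?thesis using Fs(4) unfolding Fs'_def by blast
  qed
  ultimately show ?case by blast
qed

lemma inner_butlast_tl:
  assumes "distinct Q" "2 \<le> length Q"
  shows "set (butlast (tl Q)) = inner Q"
proof -
  obtain a T where Q: "Q = a # T" using assms(2) by (cases Q) auto
  have "T \<noteq> []" using assms(2) Q by auto
  then obtain T' b where T: "T = T' @ [b]" by (metis append_butlast_last_id)
  have "a \<notin> set T'" "b \<notin> set T'" "a \<noteq> b" using assms(1) Q T by auto
  then show ?thesis unfolding inner_def Q T by auto
qed

lemma inner_sub_tl: "inner Q \<subseteq> set (tl Q)"
  unfolding inner_def by (cases Q) auto

lemma len2: "walk G P \<Longrightarrow> last P \<noteq> hd P \<Longrightarrow> 2 \<le> length P"
proof -
  assume a: "walk G P" "last P \<noteq> hd P"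
  then obtain x T where P: "P = x # T" by (cases P) auto
  then have "T \<noteq> []" using a(2) by auto
  then show ?thesis using P by (cases T) auto
qed

lemma hd_neq_last: "distinct P \<Longrightarrow> 2 \<le> length P \<Longrightarrow> hd P \<noteq> last P"
proof -
  assume a: "distinct P" "2 \<le> length P"
  then obtain x T where P: "P = x # T" by (cases P) auto
  then have "T \<noteq> []" using a(2) by auto
  then have "last P \<in> set T" using P by simp
  then show ?thesis using a(1) P by auto
qed

lemma set_butlast_inner:
  assumes "distinct P" "2 \<le> length P"
  shows "set (butlast P) = insert (hd P) (inner P)"
proof -
  obtain a T where P: "P = a # T" using assms(2) by (cases P) auto
  have "T \<noteq> []" using assms(2) P by auto
  then obtain T' b where T: "T = T' @ [b]" by (metis append_butlast_last_id)
  have "set (butlast (tl P)) = inner P" by (rule inner_butlast_tl[OF assms])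
  then have "set T' = inner P" using P T by simp
  moreover have "butlast P = a # T'" using P T by simp
  ultimately show ?thesis using P by simp
qed

lemma last_two: "2 \<le> length P \<Longrightarrow> P = butlast (butlast P) @ [last (butlast P), last P]"
proof -
  assume a: "2 \<le> length P"
  obtain T x where P: "P = T @ [x]" using a by (metis append_butlast_last_id list.size(3) not_numeral_le_zero)
  have "T \<noteq> []" using a P by auto
  then obtain T' y where T: "T = T' @ [y]" by (metis append_butlast_last_id)
  show ?thesis using P T by (simp add: butlast_append)
qed

lemma indep_set:
  fixes adj :: "'a \<Rightarrow> 'a \<Rightarrow> bool"
  assumes sym: "\<And>u w. adj u w \<Longrightarrow> adj w u"
  shows "finite X \<Longrightarrow> (\<forall>u\<in>X. card {w\<in>X. adj u w} \<le> D) \<Longrightarrow>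
    \<exists>I \<subseteq> X. (\<forall>a\<in>I. \<forall>b\<in>I. adj a b \<longrightarrow> a = b) \<and> card X \<le> (D+1) * card I"
proof (induction "card X" arbitrary: X rule: less_induct)
  case less
  show ?case
  proof (cases "X = {}")
    case True then show ?thesis by (intro exI[of _ "{}"]) simp
  next
    case False
    then obtain u where u: "u \<in> X" by blast
    define N where "N = {w\<in>X. adj u w}"
    define X' where "X' = X - insert u N"
    have finX': "finite X'" using less.prems(1) unfolding X'_def by simp
    have "X' \<subset> X" unfolding X'_def using u by blast
    then have lt: "card X' < card X" using less.prems(1) by (simp add: psubset_card_mono)
    have deg: "\<forall>w\<in>X'. card {w'\<in>X'. adj w w'} \<le> D"
    proof
      fix w assume w: "w \<in> X'"
      have "card {w'\<in>X'. adj w w'} \<le> card {w'\<in>X. adj w w'}"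
        using less.prems(1) unfolding X'_def by (intro card_mono) auto
      also have "\<dots> \<le> D" using less.prems(2) w unfolding X'_def by auto
      finally show "card {w'\<in>X'. adj w w'} \<le> D" .
    qed
    have "\<exists>I \<subseteq> X'. (\<forall>a\<in>I. \<forall>b\<in>I. adj a b \<longrightarrow> a = b) \<and> card X' \<le> (D+1) * card I"
      by (rule less.hyps[OF lt finX' deg])
    then obtain I' where I': "I' \<subseteq> X'" "\<forall>a\<in>I'. \<forall>b\<in>I'. adj a b \<longrightarrow> a = b" "card X' \<le> (D+1) * card I'"
      by blast
    define I where "I = insert u I'"
    have uI': "u \<notin> I'" using I'(1) unfolding X'_def by auto
    have "I \<subseteq> X" using I'(1) u unfolding I_def X'_def by auto
    moreover have "\<forall>a\<in>I. \<forall>b\<in>I. adj a b \<longrightarrow> a = b"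
    proof (intro ballI impI)
      fix a b assume ab: "a \<in> I" "b \<in> I" "adj a b"
      show "a = b"
      proof (cases "a = u")
        case True
        show ?thesis
        proof (rule ccontr)
          assume "a \<noteq> b"
          then have "b \<in> I'" using ab(2) True unfolding I_def by auto
          moreover have "b \<in> N" using ab(3) True \<open>b \<in> I'\<close> I'(1) unfolding N_def X'_def by auto
          ultimately show False using I'(1) unfolding X'_def by auto
        qed
      next
        case False
        then have a: "a \<in> I'" using ab(1) unfolding I_def by auto
        show ?thesis
        proof (cases "b = u")
          case True
          then have "adj u a" using ab(3) sym by simp
          then have "a \<in> N" using a I'(1) unfolding N_def X'_def by auto
          then show ?thesis using a I'(1) unfolding X'_def by auto
        next
          case False
          then have "b \<in> I'" using ab(2) unfolding I_def by auto
          then show ?thesis using a ab(3) I'(2) by blast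
        qed
      qed
    qed
    moreover have "card X \<le> (D+1) * card I"
    proof -
      have finN: "finite (insert u N)" using less.prems(1) unfolding N_def by simp
      have "X = X' \<union> (X \<inter> insert u N)" unfolding X'_def by auto
      then have "card X \<le> card X' + card (X \<inter> insert u N)" using card_Un_le[of X' "X \<inter> insert u N"] by simp
      also have "card (X \<inter> insert u N) \<le> card (insert u N)" using finN by (intro card_mono) auto
      also have "card (insert u N) \<le> Suc D"
      proof -
        have "finite N" using less.prems(1) unfolding N_def by simp
        then have "card (insert u N) \<le> Suc (card N)" by (simp add: card_insert_if)
        moreover have "card N \<le> D" using less.prems(2) u unfolding N_def by blast
        ultimately show ?thesis by simp
      qed
      finally have "card X \<le> card X' + Suc D" by simp
      also have "\<dots> \<le> (D+1) * card I' + (D+1)" using I'(3) by simp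
      also have "\<dots> = (D+1) * card I"
      proof -
        have "finite I'" using I'(1) finX' by (rule finite_subset)
        then have "card I = Suc (card I')" unfolding I_def using uI' by simp
        then show ?thesis by simp
      qed
      finally show ?thesis .
    qed
    ultimately show ?thesis by blast
  qed
qed

locale fanctx =
  fixes G :: "'a graph" and U :: "'a set" and r C d :: nat and Fan :: "'a \<Rightarrow> 'a list set"
  assumes G: "is_graph G" and UG: "U \<subseteq> verts G" and Une: "U \<noteq> {}"
    and fan: "\<And>u. u \<in> U \<Longrightarrow> finite (Fan u) \<and> card (Fan u) = d \<and> (\<forall>P\<in>Fan u. fanpath G U r u P) \<and>
       (\<forall>P\<in>Fan u. \<forall>Q\<in>Fan u. P \<noteq> Q \<longrightarrow> set (tl P) \<inter> set (tl Q) = {})"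
    and BE: "\<And>H :: 'a graph. is_graph H \<Longrightarrow> shallow_minor (2*r) H G \<Longrightarrow> card (edges H) \<le> C * card (verts H)"
begin

lemma finG: "finite (verts G)" using G unfolding is_graph_def by simp

lemma finU: "finite U" using finG UG finite_subset by auto

definition pathok :: "'a list \<Rightarrow> bool" where
  "pathok P \<longleftrightarrow> walk G P \<and> distinct P \<and> 2 \<le> length P \<and> length P \<le> 2*r+1 \<and> hd P \<in> U \<and> last P \<in> U
     \<and> inner P \<inter> U = {}"

definition ends :: "'a list \<Rightarrow> 'a set" where
  "ends P = {hd P, last P}"

definition valid :: "'a list set \<Rightarrow> bool" where
  "valid PS \<longleftrightarrow> (\<forall>P\<in>PS. pathok P) \<and>
     (\<forall>P\<in>PS. \<forall>Q\<in>PS. P \<noteq> Q \<longrightarrow> inner P \<inter> inner Q = {} \<and> ends P \<noteq> ends Q)"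

definition Lu :: "'a list set" where
  "Lu = {P. set P \<subseteq> verts G \<and> length P \<le> 2*r+1}"

lemma finite_Lu: "finite Lu"
  unfolding Lu_def by (rule finite_lists_length_le[OF finG])

lemma valid_sub: "valid PS \<Longrightarrow> PS \<subseteq> Lu"
  unfolding valid_def pathok_def Lu_def using walk_verts by blast

lemma ex_max_valid: "\<exists>PS. valid PS \<and> (\<forall>QS. valid QS \<longrightarrow> card QS \<le> card PS)"
proof -
  have "valid {}" unfolding valid_def by simp
  moreover have "\<forall>QS. valid QS \<longrightarrow> card QS < Suc (card Lu)"
  proof (intro allI impI)
    fix QS assume "valid QS"
    then have "card QS \<le> card Lu" using valid_sub finite_Lu by (simp add: card_mono)
    then show "card QS < Suc (card Lu)" by simp
  qed
  ultimately show ?thesis using Lattices_Big.ex_has_greatest_nat[of valid "{}" card "Suc (card Lu)"] by blast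
qed

definition PP :: "'a list set" where
  "PP = (SOME PS. valid PS \<and> (\<forall>QS. valid QS \<longrightarrow> card QS \<le> card PS))"

lemma PP: "valid PP" "\<And>QS. valid QS \<Longrightarrow> card QS \<le> card PP"
  using someI_ex[OF ex_max_valid] unfolding PP_def by blast+

lemma finPP: "finite PP" using valid_sub[OF PP(1)] finite_Lu finite_subset by blast

lemma PPok: "P \<in> PP \<Longrightarrow> pathok P" using PP(1) unfolding valid_def by blast

lemma PPdisj: "P \<in> PP \<Longrightarrow> Q \<in> PP \<Longrightarrow> P \<noteq> Q \<Longrightarrow> inner P \<inter> inner Q = {}"
  using PP(1) unfolding valid_def by blast

lemma PPends: "P \<in> PP \<Longrightarrow> Q \<in> PP \<Longrightarrow> ends P = ends Q \<Longrightarrow> P = Q"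
  using PP(1) unfolding valid_def by blast

definition Iset :: "'a set" where "Iset = \<Union> (inner ` PP)"

definition EH :: "'a set set" where "EH = ends ` PP"

lemma Iset_U: "Iset \<inter> U = {}"
  unfolding Iset_def using PPok unfolding pathok_def by blast

lemma maximal:
  assumes "pathok P" "inner P \<inter> Iset = {}" "ends P \<notin> EH"
  shows False
proof -
  have nP: "P \<notin> PP" using assms(3) unfolding EH_def by blast
  have "valid (insert P PP)"
    unfolding valid_def
  proof (intro conjI ballI impI)
    fix Q assume "Q \<in> insert P PP" then show "pathok Q" using assms(1) PPok by blast
  next
    fix Q Q' assume q: "Q \<in> insert P PP" "Q' \<in> insert P PP" "Q \<noteq> Q'"
    show "inner Q \<inter> inner Q' = {}"
    proof (cases "Q = P")
      case True
      then have "Q' \<in> PP" using q by simp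
      then show ?thesis using True assms(2) unfolding Iset_def by blast
    next
      case False
      then have Q: "Q \<in> PP" using q by simp
      show ?thesis
      proof (cases "Q' = P")
        case True then show ?thesis using Q assms(2) unfolding Iset_def by blast
      next
        case False then show ?thesis using Q q PPdisj by simp
      qed
    qed
    show "ends Q \<noteq> ends Q'"
    proof (cases "Q = P")
      case True
      then have "Q' \<in> PP" using q by simp
      then show ?thesis using True assms(3) unfolding EH_def by blast
    next
      case False
      then have Q: "Q \<in> PP" using q by simp
      show ?thesis
      proof (cases "Q' = P")
        case True then show ?thesis using Q assms(3) unfolding EH_def by blast
      next
        case False then show ?thesis using Q q PPends by auto
      qed
    qed
  qed
  then have "card (insert P PP) \<le> card PP" by (rule PP(2))
  then show False using finPP nP by simp
qed


definition phiH :: "'a \<Rightarrow> 'a set" where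
  "phiH u = insert u (\<Union> {inner P | P. P \<in> PP \<and> hd P = u})"

definition HH :: "'a graph" where "HH = (U, EH)"

lemma verts_HH[simp]: "verts HH = U" unfolding HH_def verts_def by simp
lemma edges_HH[simp]: "edges HH = EH" unfolding HH_def edges_def by simp

lemma HH_graph: "is_graph HH"
  unfolding is_graph_def
proof (intro conjI ballI)
  show "finite (verts HH)" using finU by simp
next
  fix e assume "e \<in> edges HH"
  then obtain P where P: "P \<in> PP" "e = {hd P, last P}" by (auto simp: EH_def ends_def)
  have "pathok P" using P(1) by (rule PPok)
  then have "hd P \<noteq> last P" "hd P \<in> U" "last P \<in> U" using hd_neq_last unfolding pathok_def by auto
  then show "\<exists>u v. e = {u, v} \<and> u \<noteq> v \<and> u \<in> verts HH \<and> v \<in> verts HH" using P(2) by auto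
qed

lemma phiH_verts: "phiH u \<subseteq> verts G" if "u \<in> U"
proof
  fix z assume "z \<in> phiH u"
  then consider "z = u" | P where "P \<in> PP" "z \<in> inner P" unfolding phiH_def by blast
  then show "z \<in> verts G"
  proof cases
    case 1 then show ?thesis using that UG by auto
  next
    case 2
    then have "walk G P" using PPok unfolding pathok_def by blast
    then show ?thesis using 2(2) walk_verts unfolding inner_def by blast
  qed
qed

lemma HH_minor: "shallow_minor (2*r) HH G"
  unfolding shallow_minor_def
proof (intro exI[of _ phiH] conjI ballI impI)
  fix x assume x: "x \<in> verts HH"
  then have xU: "x \<in> U" by simp
  show "phiH x \<subseteq> verts G" using phiH_verts xU .
  have "phiH x \<subseteq> nbhd (induce G (phiH x)) (2*r) x"
  proof
    fix z assume "z \<in> phiH x"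
    then consider "z = x" | P where "P \<in> PP" "hd P = x" "z \<in> inner P" unfolding phiH_def by blast
    then show "z \<in> nbhd (induce G (phiH x)) (2*r) x"
    proof cases
      case 1 then show ?thesis using nbhd_self by simp
    next
      case 2
      have ok: "walk G P" "distinct P" "2 \<le> length P" "length P \<le> 2*r+1"
        using PPok[OF 2(1)] unfolding pathok_def by auto
      obtain a T where PT: "P = a # T" using ok(3) by (cases P) auto
      have "T \<noteq> []" using ok(3) PT by auto
      then obtain T' b where T: "T = T' @ [b]" by (metis append_butlast_last_id)
      have bP: "butlast P = a # T'" using PT T by simp
      have "P = (a # T') @ [b]" using PT T by simp
      then have wB: "walk G (butlast P)" using walk_prefix[of G "a # T'" "[b]"] ok(1) bP by simp
      have sB: "set (butlast P) = insert (hd P) (inner P)" by (rule set_butlast_inner[OF ok(2,3)])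
      have sub: "set (butlast P) \<subseteq> phiH x" using sB 2(1,2) unfolding phiH_def by blast
      have hB: "hd (butlast P) = x" using 2(2) PT bP by simp
      have zin: "z \<in> set (butlast P)" using sB 2(3) by simp
      have len: "length (butlast P) \<le> Suc (2*r)" using ok(4) by simp
      have "z \<in> nbhd (induce G (phiH x)) (2*r) (hd (butlast P))" by (rule in_nbhd_induce[OF wB sub zin len])
      then show ?thesis using hB by simp
    qed
  qed
  then show "\<exists>c\<in>phiH x. phiH x \<subseteq> nbhd (induce G (phiH x)) (2*r) c" unfolding phiH_def by blast
next
  fix x y assume x: "x \<in> verts HH" and y: "y \<in> verts HH" and xy: "x \<noteq> y"
  show "phiH x \<inter> phiH y = {}"
  proof (rule ccontr)
    assume "phiH x \<inter> phiH y \<noteq> {}"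
    then obtain z where z: "z \<in> phiH x" "z \<in> phiH y" by blast
    have IU: "\<And>P. P \<in> PP \<Longrightarrow> inner P \<inter> U = {}" using PPok unfolding pathok_def by blast
    from z(1) consider "z = x" | P where "P \<in> PP" "hd P = x" "z \<in> inner P" unfolding phiH_def by blast
    then show False
    proof cases
      case 1
      from z(2) consider "z = y" | Q where "Q \<in> PP" "hd Q = y" "z \<in> inner Q" unfolding phiH_def by blast
      then show False
      proof cases
        case 1 then show False using \<open>z = x\<close> xy by simp
      next
        case 2 then show False using \<open>z = x\<close> x IU by auto
      qed
    next
      case 2
      note P = 2
      from z(2) consider "z = y" | Q where "Q \<in> PP" "hd Q = y" "z \<in> inner Q" unfolding phiH_def by blast
      then show False
      proof cases
        case 1 then show False using P y IU by auto
      next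
        case 2
        have "P \<noteq> Q" using P(2) 2(2) xy by auto
        then show False using PPdisj[OF P(1) 2(1)] P(3) 2(3) by auto
      qed
    qed
  qed
next
  fix x y assume x: "x \<in> verts HH" and y: "y \<in> verts HH" and e: "{x, y} \<in> edges HH"
  then obtain P where P: "P \<in> PP" "{x, y} = {hd P, last P}" by (auto simp: EH_def ends_def)
  have ok: "walk G P" "distinct P" "2 \<le> length P"
    using PPok[OF P(1)] unfolding pathok_def by auto
  have e2: "{last (butlast P), last P} \<in> edges G"
    using walk_edge[of G "butlast (butlast P)" "last (butlast P)" "last P" "[]"] ok(1) last_two[OF ok(3)] by simp
  have a1: "last (butlast P) \<in> phiH (hd P)"
  proof -
    have "butlast P \<noteq> []" using ok(3) by (cases P) auto
    then have "last (butlast P) \<in> set (butlast P)" by simp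
    then show ?thesis using set_butlast_inner[OF ok(2,3)] P(1) unfolding phiH_def by blast
  qed
  have b1: "last P \<in> phiH (last P)" unfolding phiH_def by simp
  from P(2) have "(x = hd P \<and> y = last P) \<or> (x = last P \<and> y = hd P)" by (simp add: doubleton_eq_iff)
  then show "\<exists>u\<in>phiH x. \<exists>v\<in>phiH y. {u, v} \<in> edges G"
  proof
    assume "x = hd P \<and> y = last P" then show ?thesis using a1 b1 e2 by blast
  next
    assume "x = last P \<and> y = hd P" then show ?thesis using a1 b1 e2 by (metis insert_commute)
  qed
qed

lemma card_PP: "card PP \<le> C * card U"
proof -
  have "card (edges HH) \<le> C * card (verts HH)" using BE[OF HH_graph HH_minor] .
  moreover have "inj_on ends PP" using PPends by (meson inj_onI)
  then have "card EH = card PP" unfolding EH_def by (rule card_image)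
  ultimately show ?thesis by simp
qed


definition NH :: "'a \<Rightarrow> 'a set" where "NH u = {w\<in>U. {u,w} \<in> EH}"

lemma card_ends: "P \<in> PP \<Longrightarrow> card (ends P) \<le> 2"
  unfolding ends_def by (simp add: card_insert_if)

lemma deg_sum: "(\<Sum>u\<in>U. card (NH u)) \<le> 4 * card EH"
proof -
  have finNH: "\<forall>u\<in>U. finite (NH u)" using finU unfolding NH_def by simp
  have "(\<Sum>u\<in>U. card (NH u)) = card (SIGMA u:U. NH u)" using finU finNH by simp
  also have "\<dots> \<le> card (\<Union>e\<in>EH. e \<times> e)"
  proof (rule card_mono)
    have "\<And>e. e \<in> EH \<Longrightarrow> finite e" unfolding EH_def ends_def by auto
    moreover have "finite EH" unfolding EH_def using finPP by simp
    ultimately show "finite (\<Union>e\<in>EH. e \<times> e)" by auto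
    show "(SIGMA u:U. NH u) \<subseteq> (\<Union>e\<in>EH. e \<times> e)"
    proof
      fix p assume "p \<in> (SIGMA u:U. NH u)"
      then obtain u w where p: "p = (u, w)" "{u,w} \<in> EH" unfolding NH_def by auto
      then show "p \<in> (\<Union>e\<in>EH. e \<times> e)" by blast
    qed
  qed
  also have "\<dots> \<le> (\<Sum>e\<in>EH. card (e \<times> e))" by (rule card_UN_le) (simp add: EH_def finPP)
  also have "\<dots> \<le> (\<Sum>e\<in>EH. 4)"
  proof (rule sum_mono)
    fix e assume "e \<in> EH"
    then obtain P where "P \<in> PP" "e = ends P" unfolding EH_def by auto
    then have "card e \<le> 2" using card_ends by simp
    then have "card e * card e \<le> 2 * 2" using mult_le_mono by blast
    then show "card (e \<times> e) \<le> 4" by (simp add: card_cartesian_product)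
  qed
  also have "\<dots> = 4 * card EH" by simp
  finally show ?thesis .
qed

lemma card_EH: "card EH = card PP"
proof -
  have "inj_on ends PP" using PPends by (meson inj_onI)
  then show ?thesis unfolding EH_def by (rule card_image)
qed

definition Ulow :: "'a set" where "Ulow = {u\<in>U. card (NH u) \<le> 8*C}"

lemma card_Ulow: "card U \<le> 2 * card Ulow"
proof -
  define Hi where "Hi = U - Ulow"
  have finHi: "finite Hi" using finU unfolding Hi_def by simp
  have "(\<Sum>u\<in>Hi. Suc (8*C)) \<le> (\<Sum>u\<in>Hi. card (NH u))"
    by (rule sum_mono) (auto simp: Hi_def Ulow_def)
  also have "\<dots> \<le> (\<Sum>u\<in>U. card (NH u))" using finU unfolding Hi_def by (intro sum_mono2) auto
  also have "\<dots> \<le> 4 * card EH" by (rule deg_sum)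
  also have "\<dots> \<le> 4 * (C * card U)" using card_EH card_PP by simp
  finally have "card Hi * Suc (8*C) \<le> 4 * (C * card U)" by simp
  then have "2 * card Hi * Suc (8*C) \<le> 8 * C * card U" by simp
  also have "\<dots> \<le> Suc (8*C) * card U" by simp
  finally have "Suc (8*C) * (2 * card Hi) \<le> Suc (8*C) * card U" by (simp add: algebra_simps)
  then have h: "2 * card Hi \<le> card U" by (meson mult_le_cancel1 zero_less_Suc)
  have "card U = card Hi + card Ulow"
  proof -
    have "U = Hi \<union> Ulow" "Hi \<inter> Ulow = {}" unfolding Hi_def Ulow_def by auto
    moreover have "finite Ulow" using finU unfolding Ulow_def by simp
    ultimately have "card (Hi \<union> Ulow) = card Hi + card Ulow" using finHi by (intro card_Un_disjoint) auto
    then show ?thesis using \<open>U = Hi \<union> Ulow\<close> by simp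
  qed
  then show ?thesis using h by simp
qed

lemma ex_Ustar: "\<exists>I \<subseteq> Ulow. (\<forall>a\<in>I. \<forall>b\<in>I. {a,b} \<in> EH \<longrightarrow> a = b) \<and> card Ulow \<le> (8*C+1) * card I"
proof (rule indep_set)
  show "\<And>u w. {u, w} \<in> EH \<Longrightarrow> {w, u} \<in> EH" by (simp add: insert_commute)
  show "finite Ulow" using finU unfolding Ulow_def by simp
  show "\<forall>u\<in>Ulow. card {w\<in>Ulow. {u, w} \<in> EH} \<le> 8*C"
  proof
    fix u assume u: "u \<in> Ulow"
    have "card {w\<in>Ulow. {u, w} \<in> EH} \<le> card (NH u)"
      using finU unfolding NH_def Ulow_def by (intro card_mono) auto
    then show "card {w\<in>Ulow. {u, w} \<in> EH} \<le> 8*C" using u unfolding Ulow_def by simp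
  qed
qed

definition Ustar :: "'a set" where
  "Ustar = (SOME I. I \<subseteq> Ulow \<and> (\<forall>a\<in>I. \<forall>b\<in>I. {a,b} \<in> EH \<longrightarrow> a = b) \<and> card Ulow \<le> (8*C+1) * card I)"

lemma Ustar: "Ustar \<subseteq> Ulow" "\<And>a b. a \<in> Ustar \<Longrightarrow> b \<in> Ustar \<Longrightarrow> {a,b} \<in> EH \<Longrightarrow> a = b"
  "card Ulow \<le> (8*C+1) * card Ustar"
  using someI_ex[OF ex_Ustar] unfolding Ustar_def by blast+

lemma Ustar_U: "Ustar \<subseteq> U" using Ustar(1) unfolding Ulow_def by auto

lemma finUstar: "finite Ustar" using Ustar_U finU finite_subset by auto

lemma card_U_Ustar: "card U \<le> 2 * (8*C+1) * card Ustar"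
  using card_Ulow Ustar(3) by simp

end

context fanctx
begin

lemma fanP: "v \<in> U \<Longrightarrow> P \<in> Fan v \<Longrightarrow> fanpath G U r v P"
  using fan by blast

lemma fan_disj: "v \<in> U \<Longrightarrow> P \<in> Fan v \<Longrightarrow> Q \<in> Fan v \<Longrightarrow> P \<noteq> Q \<Longrightarrow> set (tl P) \<inter> set (tl Q) = {}"
  using fan by blast

lemma fan_fin: "v \<in> U \<Longrightarrow> finite (Fan v) \<and> card (Fan v) = d"
  using fan by blast

lemma fanpath_len2: "fanpath G U r v P \<Longrightarrow> 2 \<le> length P"
  unfolding fanpath_def using len2 by metis

lemma fanpath_last_tl: "fanpath G U r v P \<Longrightarrow> last P \<in> set (tl P)"
proof -
  assume a: "fanpath G U r v P"
  then have l: "2 \<le> length P" by (rule fanpath_len2)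
  then obtain x T where P: "P = x # T" by (cases P) auto
  then have "T \<noteq> []" using l by auto
  then show ?thesis using P by simp
qed

lemma fanpath_ok: "v \<in> U \<Longrightarrow> fanpath G U r v P \<Longrightarrow> pathok P"
proof -
  assume v: "v \<in> U" and f: "fanpath G U r v P"
  have "2 \<le> length P" using f by (rule fanpath_len2)
  then show "pathok P" using f v unfolding fanpath_def pathok_def by auto
qed

definition Av :: "'a \<Rightarrow> 'a list set" where "Av v = {P \<in> Fan v. inner P \<inter> Iset = {}}"
definition Bv :: "'a \<Rightarrow> 'a list set" where "Bv v = {P \<in> Fan v. inner P \<inter> Iset \<noteq> {}}"

lemma card_Av: assumes v: "v \<in> Ulow" shows "card (Av v) \<le> 8*C"
proof -
  have vU: "v \<in> U" using v unfolding Ulow_def by simp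
  have inNH: "last P \<in> NH v" if P: "P \<in> Av v" for P
  proof -
    have PF: "P \<in> Fan v" "inner P \<inter> Iset = {}" using P unfolding Av_def by auto
    have f: "fanpath G U r v P" using fanP[OF vU PF(1)] .
    have ok: "pathok P" using fanpath_ok[OF vU f] .
    have "ends P \<in> EH"
    proof (rule ccontr)
      assume "ends P \<notin> EH"
      then show False using maximal[OF ok PF(2)] by simp
    qed
    moreover have "ends P = {v, last P}" using f unfolding ends_def fanpath_def by simp
    moreover have "last P \<in> U" using f unfolding fanpath_def by simp
    ultimately show ?thesis unfolding NH_def by simp
  qed
  have "inj_on last (Av v)"
  proof (rule inj_onI)
    fix P Q assume PQ: "P \<in> Av v" "Q \<in> Av v" "last P = last Q"
    show "P = Q"
    proof (rule ccontr)
      assume "P \<noteq> Q"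
      have F: "P \<in> Fan v" "Q \<in> Fan v" using PQ unfolding Av_def by auto
      have "last P \<in> set (tl P)" "last Q \<in> set (tl Q)"
        using fanpath_last_tl fanP[OF vU F(1)] fanP[OF vU F(2)] by blast+
      then show False using fan_disj[OF vU F \<open>P \<noteq> Q\<close>] PQ(3) by auto
    qed
  qed
  then have "card (Av v) = card (last ` Av v)" by (simp add: card_image)
  also have "\<dots> \<le> card (NH v)"
  proof (rule card_mono)
    show "finite (NH v)" using finU unfolding NH_def by simp
    show "last ` Av v \<subseteq> NH v" using inNH by blast
  qed
  also have "\<dots> \<le> 8*C" using v unfolding Ulow_def by simp
  finally show ?thesis .
qed

lemma card_Bv: assumes v: "v \<in> Ulow" shows "d \<le> 8*C + card (Bv v)"
proof -
  have vU: "v \<in> U" using v unfolding Ulow_def by simp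
  have fin: "finite (Fan v)" "card (Fan v) = d" using fan_fin[OF vU] by auto
  have "Fan v = Av v \<union> Bv v" "Av v \<inter> Bv v = {}" unfolding Av_def Bv_def by auto
  moreover have "finite (Av v)" "finite (Bv v)" using fin(1) unfolding Av_def Bv_def by auto
  ultimately have "card (Fan v) = card (Av v) + card (Bv v)" by (metis card_Un_disjoint)
  then show ?thesis using fin(2) card_Av[OF v] by simp
qed

definition xs :: "'a list \<Rightarrow> 'a list" where "xs P = takeWhile (\<lambda>z. z \<notin> Iset) (tl P)"
definition xP :: "'a list \<Rightarrow> 'a" where "xP P = hd (dropWhile (\<lambda>z. z \<notin> Iset) (tl P))"
definition rest :: "'a list \<Rightarrow> 'a list" where "rest P = tl (dropWhile (\<lambda>z. z \<notin> Iset) (tl P))"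

lemma split_B:
  assumes vU: "v \<in> U" and P: "P \<in> Bv v"
  shows "P = v # xs P @ xP P # rest P" "xP P \<in> Iset" "set (xs P) \<inter> Iset = {}"
    "set (xs P) \<inter> U = {}" "set (xs P) \<subseteq> verts G" "xP P \<in> set (tl P)"
    "walk G (v # xs P @ [xP P])" "length (v # xs P) \<le> Suc r"
proof -
  have PF: "P \<in> Fan v" "inner P \<inter> Iset \<noteq> {}" using P unfolding Bv_def by auto
  have f: "fanpath G U r v P" using fanP[OF vU PF(1)] .
  have fp: "walk G P" "distinct P" "hd P = v" "last P \<in> U" "inner P \<inter> U = {}" "length P \<le> Suc r"
    using f unfolding fanpath_def by auto
  have "P \<noteq> []" using fp(1) by auto
  then have Pv: "P = v # tl P" using fp(3) by (cases P) auto
  have "\<exists>z\<in>set (tl P). z \<in> Iset" using PF(2) inner_sub_tl[of P] by blast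
  then have dne: "dropWhile (\<lambda>z. z \<notin> Iset) (tl P) \<noteq> []" by (simp add: dropWhile_eq_Nil_conv)
  then have D: "dropWhile (\<lambda>z. z \<notin> Iset) (tl P) = xP P # rest P" unfolding xP_def rest_def by simp
  have T: "tl P = xs P @ xP P # rest P"
    using takeWhile_dropWhile_id[of "\<lambda>z. z \<notin> Iset" "tl P"] D unfolding xs_def by simp
  obtain a b c where abc: "xs P = a" "xP P = b" "rest P = c" by blast
  have P1: "P = v # a @ b # c" using Pv T abc by simp
  then show "P = v # xs P @ xP P # rest P" using abc by simp
  have xI: "b \<in> Iset" using hd_dropWhile[OF dne] abc unfolding xP_def by simp
  then show "xP P \<in> Iset" using abc by simp
  have aI: "set a \<inter> Iset = {}" using abc(1) unfolding xs_def using set_takeWhileD by fastforce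
  then show "set (xs P) \<inter> Iset = {}" using abc by simp
  show "xP P \<in> set (tl P)" using T by simp
  have sP: "set P \<subseteq> verts G" using walk_verts[OF fp(1)] .
  have sa: "set a \<subseteq> set P" using P1 by auto
  then show "set (xs P) \<subseteq> verts G" using sP abc by blast
  have "c \<noteq> []"
  proof
    assume "c = []"
    then have "last P = b" using P1 by simp
    then show False using xI fp(4) Iset_U by auto
  qed
  then have lr: "last P \<in> set c" using P1 by simp
  have dP: "distinct (v # a @ b # c)" using fp(2) P1 by simp
  have "set a \<inter> U = {}"
  proof (rule ccontr)
    assume "set a \<inter> U \<noteq> {}"
    then obtain z where z: "z \<in> set a" "z \<in> U" by blast
    have "z \<noteq> v" using dP z(1) by auto
    moreover have "z \<noteq> last P" using dP z(1) lr by auto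
    moreover have "z \<in> set P" using sa z(1) by blast
    ultimately have "z \<in> inner P" unfolding inner_def using fp(3) by auto
    then show False using fp(5) z(2) by auto
  qed
  then show "set (xs P) \<inter> U = {}" using abc by simp
  have "walk G ((v # a @ [b]) @ c)" using fp(1) P1 by simp
  then have "walk G (v # a @ [b])" using walk_prefix[of G "v # a @ [b]" c] by simp
  then show "walk G (v # xs P @ [xP P])" using abc by simp
  have "length (v # a) \<le> Suc r" using fp(6) P1 by simp
  then show "length (v # xs P) \<le> Suc r" using abc by simp
qed

lemma claimB:
  assumes v: "v \<in> Ustar" and v': "v' \<in> Ustar" and vv: "v \<noteq> v'"
    and P: "P \<in> Bv v" and P': "P' \<in> Bv v'"
  shows "set (xs P) \<inter> set (xs P') = {}"
proof (rule ccontr)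
  assume "set (xs P) \<inter> set (xs P') \<noteq> {}"
  then obtain y where y: "y \<in> set (xs P)" "y \<in> set (xs P')" by blast
  have vU: "v \<in> U" "v' \<in> U" using v v' Ustar_U by auto
  obtain as bs where A: "xs P = as @ y # bs" using y(1) by (meson split_list)
  obtain as' bs' where A': "xs P' = as' @ y # bs'" using y(2) by (meson split_list)
  have sp: "walk G (v # xs P @ [xP P])" "length (v # xs P) \<le> Suc r" "set (xs P) \<inter> U = {}" "set (xs P) \<inter> Iset = {}"
    using split_B[OF vU(1) P] by auto
  have sp': "walk G (v' # xs P' @ [xP P'])" "length (v' # xs P') \<le> Suc r" "set (xs P') \<inter> U = {}" "set (xs P') \<inter> Iset = {}"
    using split_B[OF vU(2) P'] by auto
  have "walk G ((v # as @ [y]) @ (bs @ [xP P]))" using sp(1) A by simp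
  then have w1: "walk G (v # as @ [y])" using walk_prefix[of G "v # as @ [y]" "bs @ [xP P]"] by simp
  have "walk G ((v' # as' @ [y]) @ (bs' @ [xP P']))" using sp'(1) A' by simp
  then have w2: "walk G (v' # as' @ [y])" using walk_prefix[of G "v' # as' @ [y]" "bs' @ [xP P']"] by simp
  have w2r: "walk G (y # rev as' @ [v'])" using w2 walk_rev[of G "v' # as' @ [y]"] by simp
  define W where "W = (v # as @ [y]) @ tl (y # rev as' @ [v'])"
  have wW: "walk G W" unfolding W_def using walk_join[OF w1 w2r] by simp
  have hW: "hd W = v" unfolding W_def by simp
  have lW: "last W = v'" unfolding W_def by simp
  have sW: "set W \<subseteq> {v, v'} \<union> set (xs P) \<union> set (xs P')" unfolding W_def using A A' by auto
  have lenW: "length W \<le> 2*r+1" unfolding W_def using sp(2) sp'(2) A A' by simp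
  obtain Q where Q: "walk G Q" "distinct Q" "hd Q = hd W" "last Q = last W" "set Q \<subseteq> set W" "length Q \<le> length W"
    using walk_shorten[OF wW] by blast
  have inQ: "inner Q \<subseteq> set (xs P) \<union> set (xs P')" using Q(3,4,5) hW lW sW unfolding inner_def by auto
  have "2 \<le> length Q" using len2[OF Q(1)] Q(3,4) hW lW vv by simp
  then have ok: "pathok Q" unfolding pathok_def using Q hW lW vU lenW inQ sp(3) sp'(3) by auto
  have "inner Q \<inter> Iset = {}" using inQ sp(4) sp'(4) by auto
  moreover have "ends Q \<notin> EH"
  proof
    assume "ends Q \<in> EH"
    then have "{v, v'} \<in> EH" unfolding ends_def using Q(3,4) hW lW by simp
    then show False using Ustar(2)[OF v v'] vv by simp
  qed
  ultimately show False using maximal[OF ok] by simp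
qed

definition hit :: "'a \<Rightarrow> 'a list set" where "hit v = {Q \<in> PP. \<exists>P\<in>Bv v. xP P \<in> inner Q}"
definition rep :: "'a list \<Rightarrow> 'a" where "rep Q = (SOME z. z \<in> inner Q)"
definition Bset :: "'a \<Rightarrow> 'a set" where "Bset v = insert v (\<Union>P\<in>Bv v. set (xs P))"
definition VK :: "'a set" where "VK = Ustar \<union> (\<Union>v\<in>Ustar. rep ` hit v)"
definition EK :: "'a set set" where "EK = {{v, rep Q} | v Q. v \<in> Ustar \<and> Q \<in> hit v}"
definition phiK :: "'a \<Rightarrow> 'a set" where
  "phiK z = (if z \<in> Ustar then Bset z else \<Union> {inner Q | Q. Q \<in> PP \<and> z \<in> inner Q})"
definition KK :: "'a graph" where "KK = (VK, EK)"

lemma verts_KK[simp]: "verts KK = VK" unfolding KK_def verts_def by simp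
lemma edges_KK[simp]: "edges KK = EK" unfolding KK_def edges_def by simp

lemma hit_PP: "Q \<in> hit v \<Longrightarrow> Q \<in> PP" unfolding hit_def by simp

lemma rep_in: "Q \<in> hit v \<Longrightarrow> rep Q \<in> inner Q"
proof -
  assume "Q \<in> hit v"
  then have "\<exists>z. z \<in> inner Q" unfolding hit_def by blast
  then show ?thesis unfolding rep_def by (rule someI_ex)
qed

lemma inner_U: "Q \<in> PP \<Longrightarrow> inner Q \<inter> U = {}" using PPok unfolding pathok_def by blast

lemma rep_notU: "Q \<in> hit v \<Longrightarrow> rep Q \<notin> U"
  using rep_in inner_U hit_PP by blast

lemma inner_Iset: "Q \<in> PP \<Longrightarrow> inner Q \<subseteq> Iset" unfolding Iset_def by blast

lemma phiK_rep: assumes "Q \<in> hit v" shows "phiK (rep Q) = inner Q"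
proof -
  have Q: "Q \<in> PP" "rep Q \<in> inner Q" using assms hit_PP rep_in by auto
  have "rep Q \<notin> Ustar" using rep_notU[OF assms] Ustar_U by auto
  moreover have "\<Union> {inner Q' | Q'. Q' \<in> PP \<and> rep Q \<in> inner Q'} = inner Q"
  proof
    show "\<Union> {inner Q' | Q'. Q' \<in> PP \<and> rep Q \<in> inner Q'} \<subseteq> inner Q"
    proof
      fix z assume "z \<in> \<Union> {inner Q' | Q'. Q' \<in> PP \<and> rep Q \<in> inner Q'}"
      then obtain Q' where Q': "Q' \<in> PP" "rep Q \<in> inner Q'" "z \<in> inner Q'" by blast
      have "Q' = Q" using PPdisj[OF Q'(1) Q(1)] Q'(2) Q(2) by blast
      then show "z \<in> inner Q" using Q'(3) by simp
    qed
    show "inner Q \<subseteq> \<Union> {inner Q' | Q'. Q' \<in> PP \<and> rep Q \<in> inner Q'}" using Q by blast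
  qed
  ultimately show ?thesis unfolding phiK_def by simp
qed

lemma finVK: "finite VK"
proof -
  have "\<And>v. finite (hit v)" using finPP unfolding hit_def by simp
  then show ?thesis unfolding VK_def using finUstar by simp
qed

lemma KK_graph: "is_graph KK"
  unfolding is_graph_def
proof (intro conjI ballI)
  show "finite (verts KK)" using finVK by simp
next
  fix e assume "e \<in> edges KK"
  then obtain v Q where e: "e = {v, rep Q}" "v \<in> Ustar" "Q \<in> hit v" by (auto simp: EK_def)
  have "v \<noteq> rep Q" using rep_notU[OF e(3)] e(2) Ustar_U by auto
  moreover have "v \<in> VK" "rep Q \<in> VK" using e unfolding VK_def by auto
  ultimately show "\<exists>a b. e = {a, b} \<and> a \<noteq> b \<and> a \<in> verts KK \<and> b \<in> verts KK" using e(1) by auto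
qed

lemma VK_cases:
  assumes "x \<in> VK"
  obtains "x \<in> Ustar" "phiK x = Bset x"
  | v Q where "v \<in> Ustar" "Q \<in> hit v" "x = rep Q" "x \<notin> Ustar" "phiK x = inner Q"
proof (cases "x \<in> Ustar")
  case True
  then show ?thesis using that(1) unfolding phiK_def by simp
next
  case False
  then obtain v Q where "v \<in> Ustar" "Q \<in> hit v" "x = rep Q" using assms unfolding VK_def by auto
  then show ?thesis using that(2) False phiK_rep by blast
qed

lemma Bset_inner: "v \<in> Ustar \<Longrightarrow> Q \<in> PP \<Longrightarrow> Bset v \<inter> inner Q = {}"
proof -
  assume v: "v \<in> Ustar" and Q: "Q \<in> PP"
  have vU: "v \<in> U" using v Ustar_U by auto
  have "v \<notin> inner Q" using inner_U[OF Q] vU by auto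
  moreover have "set (xs P) \<inter> inner Q = {}" if "P \<in> Bv v" for P
    using split_B(3)[OF vU that] inner_Iset[OF Q] by auto
  ultimately show ?thesis unfolding Bset_def by auto
qed

lemma Bset_disj: "v \<in> Ustar \<Longrightarrow> v' \<in> Ustar \<Longrightarrow> v \<noteq> v' \<Longrightarrow> Bset v \<inter> Bset v' = {}"
proof -
  assume v: "v \<in> Ustar" and v': "v' \<in> Ustar" and vv: "v \<noteq> v'"
  have vU: "v \<in> U" "v' \<in> U" using v v' Ustar_U by auto
  have a: "v \<notin> set (xs P')" if "P' \<in> Bv v'" for P' using split_B(4)[OF vU(2) that] vU(1) by auto
  have b: "v' \<notin> set (xs P)" if "P \<in> Bv v" for P using split_B(4)[OF vU(1) that] vU(2) by auto
  have c: "set (xs P) \<inter> set (xs P') = {}" if "P \<in> Bv v" "P' \<in> Bv v'" for P P'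
    using claimB[OF v v' vv that] .
  show ?thesis unfolding Bset_def using a b c vv by blast
qed

lemma Bset_center:
  assumes v: "v \<in> Ustar"
  shows "Bset v \<subseteq> verts G" "Bset v \<subseteq> nbhd (induce G (Bset v)) (2*r) v"
proof -
  have vU: "v \<in> U" using v Ustar_U by auto
  show "Bset v \<subseteq> verts G" unfolding Bset_def using vU UG split_B(5)[OF vU] by blast
  show "Bset v \<subseteq> nbhd (induce G (Bset v)) (2*r) v"
  proof
    fix z assume "z \<in> Bset v"
    then consider "z = v" | P where "P \<in> Bv v" "z \<in> set (xs P)" unfolding Bset_def by blast
    then show "z \<in> nbhd (induce G (Bset v)) (2*r) v"
    proof cases
      case 1 then show ?thesis using nbhd_self by simp
    next
      case 2
      have "walk G ((v # xs P) @ [xP P])" using split_B(7)[OF vU 2(1)] by simp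
      then have w: "walk G (v # xs P)" using walk_prefix[of G "v # xs P" "[xP P]"] by simp
      have sub: "set (v # xs P) \<subseteq> Bset v" unfolding Bset_def using 2(1) by auto
      have zin: "z \<in> set (v # xs P)" using 2(2) by simp
      have len: "length (v # xs P) \<le> Suc (2*r)" using split_B(8)[OF vU 2(1)] by simp
      show ?thesis using in_nbhd_induce[OF w sub zin len] by simp
    qed
  qed
qed

lemma inner_center:
  assumes Q: "Q \<in> PP" and ne: "inner Q \<noteq> {}"
  shows "inner Q \<subseteq> verts G" "\<exists>c\<in>inner Q. inner Q \<subseteq> nbhd (induce G (inner Q)) (2*r) c"
proof -
  have ok: "walk G Q" "distinct Q" "2 \<le> length Q" "length Q \<le> 2*r+1" using PPok[OF Q] unfolding pathok_def by auto
  show "inner Q \<subseteq> verts G" using walk_verts[OF ok(1)] unfolding inner_def by auto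
  define L where "L = butlast (tl Q)"
  have sL: "set L = inner Q" unfolding L_def by (rule inner_butlast_tl[OF ok(2,3)])
  have Lne: "L \<noteq> []" using sL ne by auto
  obtain a T where QT: "Q = a # T" using ok(3) by (cases Q) auto
  have "T \<noteq> []" using ok(3) QT by auto
  then have TL: "T = L @ [last T]" unfolding L_def using QT by simp
  have "walk G ([a] @ T)" using ok(1) QT by simp
  then have "walk G T" using walk_suffix[of G "[a]" T] \<open>T \<noteq> []\<close> by simp
  then have "walk G (L @ [last T])" using TL by simp
  then have wL: "walk G L" using walk_prefix[of G L "[last T]"] Lne by simp
  have len: "length L \<le> Suc (2*r)" unfolding L_def using ok(4) by simp
  have "inner Q \<subseteq> nbhd (induce G (inner Q)) (2*r) (hd L)"
  proof
    fix z assume "z \<in> inner Q"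
    then have "z \<in> set L" using sL by simp
    then show "z \<in> nbhd (induce G (inner Q)) (2*r) (hd L)" using in_nbhd_induce[OF wL _ _ len] sL by simp
  qed
  moreover have "hd L \<in> inner Q" using Lne sL by (metis list.set_sel(1))
  ultimately show "\<exists>c\<in>inner Q. inner Q \<subseteq> nbhd (induce G (inner Q)) (2*r) c" by blast
qed

lemma KK_minor: "shallow_minor (2*r) KK G"
  unfolding shallow_minor_def
proof (intro exI[of _ phiK] conjI ballI impI)
  fix x assume "x \<in> verts KK"
  then have x: "x \<in> VK" by simp
  show "phiK x \<subseteq> verts G"
  proof (cases rule: VK_cases[OF x])
    case 1
    then show ?thesis using Bset_center[OF 1(1)] by simp
  next
    case (2 v Q)
    have Q: "Q \<in> PP" "inner Q \<noteq> {}" using 2(2) hit_PP rep_in by blast+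
    show ?thesis using inner_center[OF Q] 2(5) by simp
  qed
next
  fix x assume "x \<in> verts KK"
  then have x: "x \<in> VK" by simp
  show "\<exists>c\<in>phiK x. phiK x \<subseteq> nbhd (induce G (phiK x)) (2*r) c"
  proof (cases rule: VK_cases[OF x])
    case 1
    have "x \<in> Bset x" unfolding Bset_def by simp
    then show ?thesis using Bset_center[OF 1(1)] 1(2) by auto
  next
    case (2 v Q)
    have Q: "Q \<in> PP" "inner Q \<noteq> {}" using 2(2) hit_PP rep_in by blast+
    show ?thesis using inner_center[OF Q] 2(5) by simp
  qed
next
  fix x y assume "x \<in> verts KK" "y \<in> verts KK" and xy: "x \<noteq> y"
  then have x: "x \<in> VK" and y: "y \<in> VK" by simp_all
  show "phiK x \<inter> phiK y = {}"
  proof (cases rule: VK_cases[OF x])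
    case 1
    note X = 1
    show ?thesis
    proof (cases rule: VK_cases[OF y])
      case 1 then show ?thesis using X Bset_disj xy by simp
    next
      case (2 v Q) then show ?thesis using X Bset_inner[OF X(1) hit_PP[OF 2(2)]] by simp
    qed
  next
    case (2 v Q)
    note X = 2
    show ?thesis
    proof (cases rule: VK_cases[OF y])
      case 1 then show ?thesis using X Bset_inner[OF 1(1) hit_PP[OF X(2)]] by auto
    next
      case (2 v' Q')
      have "Q \<noteq> Q'" using X(3) 2(3) xy by auto
      then show ?thesis using X(5) 2(5) PPdisj hit_PP X(2) 2(2) by simp
    qed
  qed
next
  fix x y assume "x \<in> verts KK" "y \<in> verts KK" and e: "{x, y} \<in> edges KK"
  then obtain v Q where vQ: "{x, y} = {v, rep Q}" "v \<in> Ustar" "Q \<in> hit v" by (auto simp: EK_def)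
  have vU: "v \<in> U" using vQ(2) Ustar_U by auto
  obtain P where P: "P \<in> Bv v" "xP P \<in> inner Q" using vQ(3) unfolding hit_def by blast
  have w: "walk G ((v # xs P) @ [xP P])" using split_B(7)[OF vU P(1)] by simp
  have eG: "{last (v # xs P), xP P} \<in> edges G"
  proof -
    have "v # xs P = butlast (v # xs P) @ [last (v # xs P)]" by simp
    then have "walk G (butlast (v # xs P) @ [last (v # xs P), xP P] @ [])" using w by (metis append.assoc append_Cons append_Nil append_Nil2)
    then show ?thesis by (rule walk_edge)
  qed
  have a: "last (v # xs P) \<in> phiK v"
  proof -
    have "last (v # xs P) \<in> set (v # xs P)" by (rule last_in_set) simp
    moreover have "set (v # xs P) \<subseteq> Bset v" unfolding Bset_def using P(1) by auto
    moreover have "phiK v = Bset v" using vQ(2) unfolding phiK_def by simp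
    ultimately show ?thesis by auto
  qed
  have b: "xP P \<in> phiK (rep Q)" using phiK_rep[OF vQ(3)] P(2) by simp
  from vQ(1) have "(x = v \<and> y = rep Q) \<or> (x = rep Q \<and> y = v)" by (simp add: doubleton_eq_iff)
  then show "\<exists>u\<in>phiK x. \<exists>w\<in>phiK y. {u, w} \<in> edges G"
  proof
    assume "x = v \<and> y = rep Q" then show ?thesis using a b eG by blast
  next
    assume "x = rep Q \<and> y = v" then show ?thesis using a b eG by (metis insert_commute)
  qed
qed

lemma card_EK: "(\<Sum>v\<in>Ustar. card (hit v)) \<le> card EK"
proof -
  define f where "f p = {fst p, rep (snd p)}" for p
  have finhit: "\<forall>v\<in>Ustar. finite (hit v)" using finPP unfolding hit_def by simp
  have "inj_on f (SIGMA v:Ustar. hit v)"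
  proof (rule inj_onI)
    fix p p' assume p: "p \<in> (SIGMA v:Ustar. hit v)" and p': "p' \<in> (SIGMA v:Ustar. hit v)" and eq: "f p = f p'"
    obtain v Q where vQ: "p = (v, Q)" "v \<in> Ustar" "Q \<in> hit v" using p by auto
    obtain v' Q' where vQ': "p' = (v', Q')" "v' \<in> Ustar" "Q' \<in> hit v'" using p' by auto
    have e: "{v, rep Q} = {v', rep Q'}" using eq vQ vQ' unfolding f_def by simp
    have vU: "v \<in> U" "v' \<in> U" using vQ(2) vQ'(2) Ustar_U by auto
    have "rep Q \<notin> U" "rep Q' \<notin> U" using rep_notU vQ(3) vQ'(3) by auto
    then have "v = v' \<and> rep Q = rep Q'" using e vU by (auto simp: doubleton_eq_iff)
    moreover have "Q = Q'"
    proof (rule ccontr)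
      assume "Q \<noteq> Q'"
      then have "inner Q \<inter> inner Q' = {}" using PPdisj hit_PP vQ(3) vQ'(3) by blast
      moreover have "rep Q \<in> inner Q" "rep Q' \<in> inner Q'" using rep_in vQ(3) vQ'(3) by auto
      ultimately show False using \<open>v = v' \<and> rep Q = rep Q'\<close> by auto
    qed
    ultimately show "p = p'" using vQ(1) vQ'(1) by simp
  qed
  moreover have "EK = f ` (SIGMA v:Ustar. hit v)"
  proof
    show "EK \<subseteq> f ` (SIGMA v:Ustar. hit v)"
    proof
      fix e assume "e \<in> EK"
      then obtain v Q where "e = {v, rep Q}" "v \<in> Ustar" "Q \<in> hit v" unfolding EK_def by blast
      then have "e = f (v, Q)" "(v, Q) \<in> (SIGMA v:Ustar. hit v)" unfolding f_def by auto
      then show "e \<in> f ` (SIGMA v:Ustar. hit v)" by blast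
    qed
    show "f ` (SIGMA v:Ustar. hit v) \<subseteq> EK"
    proof
      fix e assume "e \<in> f ` (SIGMA v:Ustar. hit v)"
      then obtain v Q where "v \<in> Ustar" "Q \<in> hit v" "e = {v, rep Q}" unfolding f_def by auto
      then show "e \<in> EK" unfolding EK_def by blast
    qed
  qed
  ultimately have "card EK = card (SIGMA v:Ustar. hit v)" by (simp add: card_image)
  also have "\<dots> = (\<Sum>v\<in>Ustar. card (hit v))" using finUstar finhit by simp
  finally show ?thesis by simp
qed

lemma card_inner: "Q \<in> PP \<Longrightarrow> card (inner Q) \<le> 2*r"
proof -
  assume Q: "Q \<in> PP"
  have ok: "distinct Q" "2 \<le> length Q" "length Q \<le> 2*r+1" using PPok[OF Q] unfolding pathok_def by auto
  have "inner Q = set (butlast (tl Q))" using inner_butlast_tl[OF ok(1,2)] by simp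
  then have "card (inner Q) \<le> length (butlast (tl Q))" using card_length by metis
  then show ?thesis using ok(3) by simp
qed

lemma card_Bv_hit: assumes v: "v \<in> Ustar" shows "card (Bv v) \<le> 2*r * card (hit v)"
proof -
  have vU: "v \<in> U" using v Ustar_U by auto
  have "inj_on xP (Bv v)"
  proof (rule inj_onI)
    fix P P' assume P: "P \<in> Bv v" and P': "P' \<in> Bv v" and eq: "xP P = xP P'"
    show "P = P'"
    proof (rule ccontr)
      assume "P \<noteq> P'"
      have F: "P \<in> Fan v" "P' \<in> Fan v" using P P' unfolding Bv_def by auto
      have "xP P \<in> set (tl P)" "xP P' \<in> set (tl P')" using split_B(6)[OF vU P] split_B(6)[OF vU P'] by auto
      then show False using fan_disj[OF vU F \<open>P \<noteq> P'\<close>] eq by auto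
    qed
  qed
  then have "card (Bv v) = card (xP ` Bv v)" by (simp add: card_image)
  also have "\<dots> \<le> card (\<Union> (inner ` hit v))"
  proof (rule card_mono)
    have "finite (hit v)" using finPP unfolding hit_def by simp
    moreover have "\<And>Q. finite (inner Q)" unfolding inner_def by simp
    ultimately show "finite (\<Union> (inner ` hit v))" by blast
    show "xP ` Bv v \<subseteq> \<Union> (inner ` hit v)"
    proof
      fix z assume "z \<in> xP ` Bv v"
      then obtain P where P: "P \<in> Bv v" "z = xP P" by blast
      have "xP P \<in> Iset" using split_B(2)[OF vU P(1)] .
      then obtain Q where "Q \<in> PP" "xP P \<in> inner Q" unfolding Iset_def by blast
      then have "Q \<in> hit v" unfolding hit_def using P(1) by blast
      then show "z \<in> \<Union> (inner ` hit v)" using P(2) \<open>xP P \<in> inner Q\<close> by blast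
    qed
  qed
  also have "\<dots> \<le> (\<Sum>Q\<in>hit v. card (inner Q))"
    using card_UN_le[of "hit v" inner] finPP unfolding hit_def by simp
  also have "\<dots> \<le> (\<Sum>Q\<in>hit v. 2*r)" by (rule sum_mono) (rule card_inner[OF hit_PP])
  also have "\<dots> = 2*r * card (hit v)" by simp
  finally show ?thesis .
qed

lemma card_VK: "card VK \<le> card Ustar + card PP"
proof -
  have "VK \<subseteq> Ustar \<union> rep ` PP" unfolding VK_def using hit_PP by blast
  then have "card VK \<le> card (Ustar \<union> rep ` PP)" using finUstar finPP by (intro card_mono) auto
  also have "\<dots> \<le> card Ustar + card (rep ` PP)" by (rule card_Un_le)
  also have "card (rep ` PP) \<le> card PP" by (rule card_image_le[OF finPP])
  finally show ?thesis by simp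
qed

lemma final_contra:
  assumes dbig: "8*C + 2*r*C*(1 + 2*C*(8*C+1)) < d"
  shows False
proof -
  define s where "s = card Ustar"
  define K0 where "K0 = 2*r*C*(1 + 2*C*(8*C+1))"
  have "0 < card U" using Une finU by (simp add: card_gt_0_iff)
  then have spos: "0 < s" using card_U_Ustar unfolding s_def by (metis gr0I mult_0_right not_le)
  have "s * (d - 8*C) = (\<Sum>v\<in>Ustar. d - 8*C)" unfolding s_def by simp
  also have "\<dots> \<le> (\<Sum>v\<in>Ustar. card (Bv v))"
  proof (rule sum_mono)
    fix v assume "v \<in> Ustar"
    then have "v \<in> Ulow" using Ustar(1) by auto
    then show "d - 8*C \<le> card (Bv v)" using card_Bv by fastforce
  qed
  also have "\<dots> \<le> (\<Sum>v\<in>Ustar. 2*r * card (hit v))" by (rule sum_mono) (rule card_Bv_hit)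
  also have "\<dots> = 2*r * (\<Sum>v\<in>Ustar. card (hit v))" by (simp add: sum_distrib_left)
  also have "\<dots> \<le> 2*r * card EK" using card_EK by simp
  also have "\<dots> \<le> 2*r * (C * card VK)"
  proof -
    have "card (edges KK) \<le> C * card (verts KK)" by (rule BE[OF KK_graph KK_minor])
    then show ?thesis by simp
  qed
  also have "\<dots> \<le> 2*r * (C * (s + C * (2 * (8*C+1) * s)))"
  proof -
    have "card PP \<le> C * (2 * (8*C+1) * s)"
      using card_PP card_U_Ustar unfolding s_def by (meson le_trans mult_le_mono2)
    then have "card VK \<le> s + C * (2 * (8*C+1) * s)" using card_VK unfolding s_def by linarith
    then show ?thesis by simp
  qed
  also have "\<dots> = s * K0" unfolding K0_def by (simp add: algebra_simps)
  finally have "s * (d - 8*C) \<le> s * K0" .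
  then have "d - 8*C \<le> K0" using spos by simp
  then show False using dbig unfolding K0_def by simp
qed

end

lemma rank_fin: "rank G r m v \<noteq> \<infinity> \<longleftrightarrow> (\<exists>i. v \<in> ranked G r m i)"
  by (simp add: rank_def)

theorem theorem1p4:
  fixes \<C> :: "'a graph set"
  assumes "\<forall>G\<in>\<C>. is_graph G"
  shows "bounded_expansion \<C> \<longleftrightarrow>
         (\<forall>r::nat. \<exists>m::nat. \<forall>G\<in>\<C>. \<forall>v\<in>verts G. rank G r m v \<noteq> \<infinity>)"
proof
  assume BE: "bounded_expansion \<C>"
  show "\<forall>r::nat. \<exists>m::nat. \<forall>G\<in>\<C>. \<forall>v\<in>verts G. rank G r m v \<noteq> \<infinity>"
  proof
    fix r :: nat
    obtain c :: real where c: "\<forall>G\<in>\<C>. \<forall>H :: 'a graph. is_graph H \<and> shallow_minor (2*r) H G \<longrightarrow>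
      real (card (edges H)) \<le> c * real (card (verts H))"
      using BE unfolding bounded_expansion_def by blast
    define C :: nat where "C = nat \<lceil>c\<rceil> + 1"
    have cC: "c \<le> real C" unfolding C_def by linarith
    define d :: nat where "d = 8*C + 2*r*C*(1 + 2*C*(8*C+1)) + 1"
    show "\<exists>m::nat. \<forall>G\<in>\<C>. \<forall>v\<in>verts G. rank G r m v \<noteq> \<infinity>"
    proof (intro exI[of _ "r*d"] ballI)
      fix G v assume G: "G \<in> \<C>" and v: "v \<in> verts G"
      have gG: "is_graph G" using assms G by blast
      have finG: "finite (verts G)" using gG unfolding is_graph_def by simp
      show "rank G r (r*d) v \<noteq> \<infinity>"
      proof (rule ccontr)
        assume "\<not> rank G r (r*d) v \<noteq> \<infinity>"
        then have nv: "\<forall>i. v \<notin> ranked G r (r*d) i" using rank_fin[of G r "r*d" v] by simp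
        obtain U where U: "U \<subseteq> verts G" "v \<in> U"
          "\<forall>u\<in>U. \<forall>S. S \<subseteq> verts G - {u} \<and> card S \<le> r*d \<longrightarrow>
             (\<exists>w\<in>U. w \<noteq> u \<and> w \<in> nbhd (delete_verts G S) r u)"
          using ranked_stall[OF finG v nv] by blast
        have exF: "\<exists>Fs. finite Fs \<and> card Fs = d \<and> (\<forall>P\<in>Fs. fanpath G U r u P) \<and>
           (\<forall>P\<in>Fs. \<forall>Q\<in>Fs. P \<noteq> Q \<longrightarrow> set (tl P) \<inter> set (tl Q) = {})" if u: "u \<in> U" for u
          using fan_exists[OF U(1) u, of "r*d" r d] U(3) u by blast
        define Fan where "Fan u = (SOME Fs. finite Fs \<and> card Fs = d \<and> (\<forall>P\<in>Fs. fanpath G U r u P) \<and>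
           (\<forall>P\<in>Fs. \<forall>Q\<in>Fs. P \<noteq> Q \<longrightarrow> set (tl P) \<inter> set (tl Q) = {}))" for u
        have Fan: "finite (Fan u) \<and> card (Fan u) = d \<and> (\<forall>P\<in>Fan u. fanpath G U r u P) \<and>
           (\<forall>P\<in>Fan u. \<forall>Q\<in>Fan u. P \<noteq> Q \<longrightarrow> set (tl P) \<inter> set (tl Q) = {})" if u: "u \<in> U" for u
          unfolding Fan_def by (rule someI_ex[OF exF[OF u]])
        have BEn: "card (edges H) \<le> C * card (verts H)"
          if "is_graph H" "shallow_minor (2*r) H G" for H :: "'a graph"
        proof -
          have "real (card (edges H)) \<le> c * real (card (verts H))" using c G that by blast
          also have "\<dots> \<le> real C * real (card (verts H))" using cC by (simp add: mult_right_mono)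
          finally have "real (card (edges H)) \<le> real (C * card (verts H))" by simp
          then show ?thesis by (simp only: of_nat_le_iff)
        qed
        have ctx: "fanctx G U r C d Fan"
        proof (unfold_locales)
          show "is_graph G" by (rule gG)
          show "U \<subseteq> verts G" by (rule U(1))
          show "U \<noteq> {}" using U(2) by blast
          show "\<And>u. u \<in> U \<Longrightarrow> finite (Fan u) \<and> card (Fan u) = d \<and> (\<forall>P\<in>Fan u. fanpath G U r u P) \<and>
            (\<forall>P\<in>Fan u. \<forall>Q\<in>Fan u. P \<noteq> Q \<longrightarrow> set (tl P) \<inter> set (tl Q) = {})" by (rule Fan)
          show "\<And>H :: 'a graph. is_graph H \<Longrightarrow> shallow_minor (2 * r) H G \<Longrightarrow> card (edges H) \<le> C * card (verts H)"
            using BEn by blast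
        qed
        have "8*C + 2*r*C*(1 + 2*C*(8*C+1)) < d" unfolding d_def by simp
        then show False by (rule fanctx.final_contra[OF ctx])
      qed
    qed
  qed
next
  assume R: "\<forall>r::nat. \<exists>m::nat. \<forall>G\<in>\<C>. \<forall>v\<in>verts G. rank G r m v \<noteq> \<infinity>"
  show "bounded_expansion \<C>"
    unfolding bounded_expansion_def
  proof
    fix r :: nat
    obtain m where m: "\<forall>G\<in>\<C>. \<forall>v\<in>verts G. rank G (4*r+1) m v \<noteq> \<infinity>" using R by blast
    show "\<exists>c::real. \<forall>G\<in>\<C>. \<forall>H :: 'a graph. is_graph H \<and> shallow_minor r H G \<longrightarrow>
      real (card (edges H)) \<le> c * real (card (verts H))"
    proof (intro exI[of _ "real ((m+1)^(4*r+1))"] ballI allI impI)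
      fix G H assume G: "G \<in> \<C>" and H: "is_graph (H :: 'a graph) \<and> shallow_minor r H G"
      have gG: "is_graph G" using assms G by blast
      have all: "\<forall>v\<in>verts G. \<exists>i. v \<in> ranked G (4*r+1) m i"
      proof
        fix v assume "v \<in> verts G"
        then have "rank G (4*r+1) m v \<noteq> \<infinity>" using m G by blast
        then show "\<exists>i. v \<in> ranked G (4*r+1) m i" by (rule rank_fin[THEN iffD1])
      qed
      have "card (edges H) \<le> (m+1)^(4*r+1) * card (verts H)"
        using rank_density[OF gG all] H by blast
      then have "real (card (edges H)) \<le> real ((m+1)^(4*r+1) * card (verts H))" by (simp only: of_nat_le_iff)
      then show "real (card (edges H)) \<le> real ((m+1)^(4*r+1)) * real (card (verts H))" by simp
    qed
  qed
qed


end
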